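(* Let $m,n,q_1,\dots,q_m$ be positive integers with $Q=q_1+\dots+q_m\le n$, and let $G$ and $H$ be two graphs on the vertex set $[m]$. Let $X$ and $Y$ be independent random graphs with $X\in\mathcal{G}(n,p_1)$ and $Y\in\mathcal{G}(n,p_2)$. Suppose that for every set $J\subseteq[m]$ with $|E(G|_J)|+|E(H|_J)|\ge 1$ we have \[ p_1^{|E(G|_J)|}\,p_2^{|E(H|_J)|}\prod_{j\in J}q_j\ \ge\ 3\cdot 2^{m+1}\,Q\log n . \] Then with probability at least $1-n^{-Q}$, the pair $(G,H)$ is $(q_1,\dots,q_m)$-embeddable in $(X,Y)$.
   Context: All graphs are finite and simple; $[m]=\{1,\dots,m\}$; for $S\subseteq V(G)$, $G|_S$ is the induced subgraph of $G$ on $S$. $\mathcal{G}(n,p)$ is the Erdős–Rényi random graph on $n$ vertices with edge probability $p$; $\log$ is the natural logarithm. Let $X,Y$ be graphs on $n$ vertices, $G,H$ graphs on vertex set $[m]$, $\sigma:V(X)\to V(Y)$ a bijection, and $V_1,\dots,V_m$ pairwise disjoint subsets of $V(Y)$. The pair $(G,H)$ is embeddable in $(X,Y)$ with respect to $V_1,\dots,V_m$ and $\sigma$ if there exist vertices $v_i\in V_i$ ($i\in[m]$) such that for all $i,j\in[m]$: $\{i,j\}\in E(H)\Rightarrow\{v_i,v_j\}\in E(Y)$, and $\{i,j\}\in E(G)\Rightarrow\{\sigma^{-1}(v_i),\sigma^{-1}(v_j)\}\in E(X)$. For nonnegative integers $q_1,\dots,q_m$ with $q_1+\dots+q_m\le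 n$, the pair $(G,H)$ is $(q_1,\dots,q_m)$-embeddable in $(X,Y)$ if it is embeddable in $(X,Y)$ with respect to every list $V_1,\dots,V_m$ of pairwise disjoint subsets of $V(Y)$ with $|V_i|=q_i$ for all $i$, and every bijection $\sigma:V(X)\to V(Y)$. *)

theory Defs
  imports "HOL-Probability.Probability"
begin

text \<open>Simple graphs on a vertex set V are represented by their edge sets:
  sets of 2-element subsets of V.\<close>

definition all_edges :: "nat set \<Rightarrow> nat set set" where
  "all_edges V = {e. e \<subseteq> V \<and> card e = 2}"

definition is_graph_on :: "nat set \<Rightarrow> nat set set \<Rightarrow> bool" where
  "is_graph_on V E \<longleftrightarrow> E \<subseteq> all_edges V"

definition induced_edges :: "nat set set \<Rightarrow> nat set \<Rightarrow> nat set set" where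
  "induced_edges E J = {e \<in> E. e \<subseteq> J}"

definition gnp :: "nat \<Rightarrow> real \<Rightarrow> nat set set pmf" where
  "gnp n p = map_pmf (\<lambda>f. {e \<in> all_edges {1..n}. f e})
      (Pi_pmf (all_edges {1..n}) False (\<lambda>_. bernoulli_pmf p))"

definition embeddable_wrt ::
  "nat \<Rightarrow> nat \<Rightarrow> nat set set \<Rightarrow> nat set set \<Rightarrow> nat set set \<Rightarrow> nat set set
   \<Rightarrow> (nat \<Rightarrow> nat set) \<Rightarrow> (nat \<Rightarrow> nat) \<Rightarrow> bool" where
  "embeddable_wrt m n G H X Y V \<sigma> \<longleftrightarrow>
     (\<exists>v. (\<forall>i\<in>{1..m}. v i \<in> V i) \<and>
          (\<forall>i\<in>{1..m}. \<forall>j\<in>{1..m}.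
              ({i, j} \<in> H \<longrightarrow> {v i, v j} \<in> Y) \<and>
              ({i, j} \<in> G \<longrightarrow>
                 {inv_into {1..n} \<sigma> (v i), inv_into {1..n} \<sigma> (v j)} \<in> X)))"

definition q_embeddable ::
  "nat \<Rightarrow> nat \<Rightarrow> (nat \<Rightarrow> nat) \<Rightarrow> nat set set \<Rightarrow> nat set set \<Rightarrow> nat set set
   \<Rightarrow> nat set set \<Rightarrow> bool" where
  "q_embeddable m n q G H X Y \<longleftrightarrow>
     (\<forall>V \<sigma>. (\<forall>i\<in>{1..m}. V i \<subseteq> {1..n} \<and> card (V i) = q i) \<and>
            (\<forall>i\<in>{1..m}. \<forall>j\<in>{1..m}. i \<noteq> j \<longrightarrow> V i \<inter> V j = {}) \<and>
            bij_betw \<sigma> {1..n} {1..n}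
            \<longrightarrow> embeddable_wrt m n G H X Y V \<sigma>)"

end

theory Submission
  imports Defs
begin


definition wt :: "'a set \<Rightarrow> ('a \<Rightarrow> real) \<Rightarrow> 'a set \<Rightarrow> real" where
  "wt E p T = (\<Prod>e\<in>E. if e \<in> T then p e else 1 - p e)"

definition Ew :: "'a set \<Rightarrow> ('a \<Rightarrow> real) \<Rightarrow> ('a set \<Rightarrow> real) \<Rightarrow> real" where
  "Ew E p f = (\<Sum>T\<in>Pow E. wt E p T * f T)"

lemma Ew_empty[simp]: "Ew {} p f = f {}"
  by (simp add: Ew_def wt_def)

lemma Ew_insert:
  assumes "finite E" "x \<notin> E"
  shows "Ew (insert x E) p f = Ew E p (\<lambda>T. p x * f (insert x T) + (1 - p x) * f T)"
proof -
  have disj: "Pow E \<inter> insert x ` Pow E = {}" using assms by auto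
  have inj: "inj_on (insert x) (Pow E)" using assms by (auto simp: inj_on_def)
  have w1: "wt (insert x E) p (insert x T) = p x * wt E p T" if "T \<subseteq> E" for T
  proof -
    have "wt (insert x E) p (insert x T) = p x * (\<Prod>e\<in>E. if e \<in> insert x T then p e else 1 - p e)"
      unfolding wt_def using assms by (simp add: prod.insert)
    also have "(\<Prod>e\<in>E. if e \<in> insert x T then p e else 1 - p e) = wt E p T"
      unfolding wt_def using assms by (intro prod.cong) auto
    finally show ?thesis .
  qed
  have w0: "wt (insert x E) p T = (1 - p x) * wt E p T" if "T \<subseteq> E" for T
    unfolding wt_def using assms that by (auto simp: prod.insert)
  have "Ew (insert x E) p f = (\<Sum>T\<in>Pow E \<union> insert x ` Pow E. wt (insert x E) p T * f T)"
    unfolding Ew_def by (simp add: Pow_insert)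
  also have "\<dots> = (\<Sum>T\<in>Pow E. wt (insert x E) p T * f T) + (\<Sum>T\<in>insert x ` Pow E. wt (insert x E) p T * f T)"
    using assms disj by (intro sum.union_disjoint) auto
  also have "(\<Sum>T\<in>insert x ` Pow E. wt (insert x E) p T * f T) = (\<Sum>T\<in>Pow E. wt (insert x E) p (insert x T) * f (insert x T))"
    using inj by (simp add: sum.reindex)
  also have "\<dots> = (\<Sum>T\<in>Pow E. wt E p T * (p x * f (insert x T)))"
    by (intro sum.cong) (auto simp: w1)
  also have "(\<Sum>T\<in>Pow E. wt (insert x E) p T * f T) = (\<Sum>T\<in>Pow E. wt E p T * ((1 - p x) * f T))"
    by (intro sum.cong) (auto simp: w0)
  finally show ?thesis unfolding Ew_def
    by (simp add: sum.distrib[symmetric] algebra_simps)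
qed

lemma wt_nonneg: "(\<And>e. e \<in> E \<Longrightarrow> 0 \<le> p e \<and> p e \<le> 1) \<Longrightarrow> 0 \<le> wt E p T"
  unfolding wt_def by (intro prod_nonneg) auto

lemma Ew_mono:
  assumes "\<And>e. e \<in> E \<Longrightarrow> 0 \<le> p e \<and> p e \<le> 1" "\<And>T. T \<subseteq> E \<Longrightarrow> f T \<le> g T"
  shows "Ew E p f \<le> Ew E p g"
  unfolding Ew_def using assms by (intro sum_mono mult_left_mono) (auto intro: wt_nonneg)

lemma Ew_cong:
  assumes "\<And>T. T \<subseteq> E \<Longrightarrow> f T = g T"
  shows "Ew E p f = Ew E p g"
  unfolding Ew_def using assms by (intro sum.cong) auto

lemma Ew_add: "Ew E p (\<lambda>T. f T + g T) = Ew E p f + Ew E p g"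
  unfolding Ew_def by (simp add: algebra_simps sum.distrib)

lemma Ew_cmult: "Ew E p (\<lambda>T. c * f T) = c * Ew E p f"
  unfolding Ew_def by (simp add: algebra_simps sum_distrib_left)

lemma Ew_diff: "Ew E p (\<lambda>T. f T - g T) = Ew E p f - Ew E p g"
  unfolding Ew_def by (simp add: algebra_simps sum_subtractf)

lemma Ew_sum: "Ew E p (\<lambda>T. \<Sum>i\<in>I. f i T) = (\<Sum>i\<in>I. Ew E p (f i))"
  unfolding Ew_def by (simp add: sum_distrib_left sum.swap[of _ I])

lemma Ew_const: "finite E \<Longrightarrow> Ew E p (\<lambda>T. c) = c"
proof (induction E rule: finite_induct)
  case empty then show ?case by simp
next
  case (insert x F) then show ?case by (simp add: Ew_insert algebra_simps)
qed

lemma Ew_indep: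
  assumes "finite E" "S \<subseteq> E" "\<And>T. g T = g (T - S)"
  shows "Ew E p (\<lambda>T. of_bool (S \<subseteq> T) * g T) = (\<Prod>e\<in>S. p e) * Ew E p g"
  using assms
proof (induction E arbitrary: S g rule: finite_induct)
  case empty then show ?case by simp
next
  case (insert x F)
  show ?case
  proof (cases "x \<in> S")
    case True
    have gi: "g (insert x T) = g T" for T
    proof -
      have "g (insert x T) = g (insert x T - S)" by (rule insert.prems(2))
      also have "insert x T - S = T - S" using True by auto
      also have "g (T - S) = g T" by (rule insert.prems(2)[symmetric])
      finally show ?thesis .
    qed
    have g': "g T = g (T - (S - {x}))" for T
    proof -
      have "g (T - (S - {x})) = g (T - (S - {x}) - S)" by (rule insert.prems(2))
      also have "T - (S - {x}) - S = T - S" by auto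
      also have "g (T - S) = g T" by (rule insert.prems(2)[symmetric])
      finally show ?thesis by simp
    qed
    have "Ew (insert x F) p (\<lambda>T. of_bool (S \<subseteq> T) * g T)
        = Ew F p (\<lambda>T. p x * (of_bool (S - {x} \<subseteq> T) * g T))"
    proof -
      have "Ew (insert x F) p (\<lambda>T. of_bool (S \<subseteq> T) * g T) = Ew F p (\<lambda>T. p x * (of_bool (S \<subseteq> insert x T) * g (insert x T)) + (1 - p x) * (of_bool (S \<subseteq> T) * g T))"
        using insert.hyps by (rule Ew_insert)
      also have "\<dots> = Ew F p (\<lambda>T. p x * (of_bool (S - {x} \<subseteq> T) * g T))"
      proof (rule Ew_cong)
        fix T assume "T \<subseteq> F"
        then have "\<not> S \<subseteq> T" "(S \<subseteq> insert x T) = (S - {x} \<subseteq> T)" using True insert.hyps by auto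
        then show "p x * (of_bool (S \<subseteq> insert x T) * g (insert x T)) + (1 - p x) * (of_bool (S \<subseteq> T) * g T) = p x * (of_bool (S - {x} \<subseteq> T) * g T)"
          by (simp add: gi)
      qed
      finally show ?thesis .
    qed
    also have "\<dots> = p x * ((\<Prod>e\<in>S - {x}. p e) * Ew F p g)"
      using insert.prems g' by (subst Ew_cmult, subst insert.IH) auto
    also have "Ew F p g = Ew (insert x F) p g"
      using insert.hyps by (subst Ew_insert) (auto simp: gi algebra_simps)
    also have "p x * ((\<Prod>e\<in>S - {x}. p e) * Ew (insert x F) p g) = (\<Prod>e\<in>S. p e) * Ew (insert x F) p g"
      using True insert.hyps insert.prems finite_subset
      by (subst prod.remove[of S x]) (auto intro: finite_subset)
    finally show ?thesis .
  next
    case False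
    have SF: "S \<subseteq> F" using insert.prems False by auto
    have g1: "g (insert x T) = g (insert x (T - S))" for T
    proof -
      have "g (insert x T) = g (insert x T - S)" by (rule insert.prems(2))
      also have "insert x T - S = insert x (T - S)" using False by auto
      finally show ?thesis .
    qed
    note IH1 = insert.IH[OF SF, of "\<lambda>T. g (insert x T)", OF g1]
    note IH0 = insert.IH[OF SF, of g, OF insert.prems(2)]
    have "Ew (insert x F) p (\<lambda>T. of_bool (S \<subseteq> T) * g T)
        = Ew F p (\<lambda>T. p x * (of_bool (S \<subseteq> T) * g (insert x T)) + (1 - p x) * (of_bool (S \<subseteq> T) * g T))"
      using insert.hyps False by (subst Ew_insert) (auto intro!: Ew_cong)
    also have "\<dots> = p x * ((\<Prod>e\<in>S. p e) * Ew F p (\<lambda>T. g (insert x T))) + (1 - p x) * ((\<Prod>e\<in>S. p e) * Ew F p g)"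
      by (simp add: Ew_add Ew_cmult IH1 IH0)
    also have "\<dots> = (\<Prod>e\<in>S. p e) * Ew (insert x F) p g"
    proof -
      have "Ew (insert x F) p g = p x * Ew F p (\<lambda>T. g (insert x T)) + (1 - p x) * Ew F p g"
        by (subst Ew_insert[OF insert.hyps]) (rule trans[OF Ew_add], simp only: Ew_cmult)
      then show ?thesis by (simp add: ring_distribs mult_ac)
    qed
    finally show ?thesis .
  qed
qed

lemma Ew_prob_sub:
  assumes "finite E" "S \<subseteq> E"
  shows "Ew E p (\<lambda>T. of_bool (S \<subseteq> T)) = (\<Prod>e\<in>S. p e)"
  using Ew_indep[OF assms, of "\<lambda>_. 1" p] assms by (simp add: Ew_const)

lemma harris:
  assumes "finite E" "\<And>e. e \<in> E \<Longrightarrow> 0 \<le> p e \<and> p e \<le> 1"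
    and "\<And>S T. S \<subseteq> T \<Longrightarrow> T \<subseteq> E \<Longrightarrow> f S \<le> f T"
    and "\<And>S T. S \<subseteq> T \<Longrightarrow> T \<subseteq> E \<Longrightarrow> g T \<le> g S"
  shows "Ew E p (\<lambda>T. f T * g T) \<le> Ew E p f * Ew E p g"
  using assms
proof (induction E arbitrary: f g rule: finite_induct)
  case empty then show ?case by simp
next
  case (insert x F)
  define a1 where "a1 = Ew F p (\<lambda>T. f (insert x T))"
  define a0 where "a0 = Ew F p f"
  define b1 where "b1 = Ew F p (\<lambda>T. g (insert x T))"
  define b0 where "b0 = Ew F p g"
  have px: "0 \<le> p x" "p x \<le> 1" using insert.prems by auto
  have pF: "\<And>e. e \<in> F \<Longrightarrow> 0 \<le> p e \<and> p e \<le> 1" using insert.prems by auto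
  have "Ew (insert x F) p (\<lambda>T. f T * g T)
      = p x * Ew F p (\<lambda>T. f (insert x T) * g (insert x T)) + (1 - p x) * Ew F p (\<lambda>T. f T * g T)"
    using insert.hyps by (simp add: Ew_insert Ew_add Ew_cmult)
  also have "\<dots> \<le> p x * (a1 * b1) + (1 - p x) * (a0 * b0)"
  proof (rule add_mono)
    show "p x * Ew F p (\<lambda>T. f (insert x T) * g (insert x T)) \<le> p x * (a1 * b1)"
      unfolding a1_def b1_def using px pF insert.prems insert.hyps
    proof (intro mult_left_mono insert.IH)
      fix S T assume "S \<subseteq> T" "T \<subseteq> F"
      then have "insert x S \<subseteq> insert x T" "insert x T \<subseteq> insert x F" by auto
      then show "f (insert x S) \<le> f (insert x T)" "g (insert x T) \<le> g (insert x S)"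
        using insert.prems(2,3) by blast+
    qed (use px pF insert.hyps in auto)
    show "(1 - p x) * Ew F p (\<lambda>T. f T * g T) \<le> (1 - p x) * (a0 * b0)"
      unfolding a0_def b0_def
    proof (intro mult_left_mono insert.IH)
      fix S T assume "S \<subseteq> T" "T \<subseteq> F"
      then have "T \<subseteq> insert x F" by auto
      then show "f S \<le> f T" "g T \<le> g S"
        using insert.prems(2,3) \<open>S \<subseteq> T\<close> by blast+
    qed (use px pF insert.hyps in auto)
  qed
  also have "\<dots> \<le> (p x * a1 + (1 - p x) * a0) * (p x * b1 + (1 - p x) * b0)"
  proof -
    have "a0 \<le> a1" unfolding a0_def a1_def using pF
    proof (intro Ew_mono)
      fix T assume "T \<subseteq> F" then show "f T \<le> f (insert x T)" by (intro insert.prems(2)) auto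
    qed auto
    moreover have "b1 \<le> b0" unfolding b0_def b1_def using pF
    proof (intro Ew_mono)
      fix T assume "T \<subseteq> F" then show "g (insert x T) \<le> g T" by (intro insert.prems(3)) auto
    qed auto
    ultimately have "p x * (1 - p x) * ((a1 - a0) * (b1 - b0)) \<le> 0"
      using px by (intro mult_nonneg_nonpos) (auto intro: mult_nonneg_nonpos)
    then show ?thesis by (simp add: algebra_simps)
  qed
  also have "\<dots> = Ew (insert x F) p f * Ew (insert x F) p g"
    using insert.hyps by (simp add: Ew_insert Ew_add Ew_cmult a0_def a1_def b0_def b1_def)
  finally show ?case .
qed


definition nd :: "('i \<Rightarrow> 'a set) \<Rightarrow> 'i set \<Rightarrow> 'a set \<Rightarrow> real" where
  "nd S I T = of_bool (\<forall>j\<in>I. \<not> S j \<subseteq> T)"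

definition pdep :: "('a \<Rightarrow> real) \<Rightarrow> ('i \<Rightarrow> 'a set) \<Rightarrow> 'i \<Rightarrow> 'i \<Rightarrow> real" where
  "pdep p S k j = of_bool (j \<noteq> k \<and> S k \<inter> S j \<noteq> {}) * (\<Prod>e\<in>S k \<union> S j. p e)"

definition Dl :: "('a \<Rightarrow> real) \<Rightarrow> ('i \<Rightarrow> 'a set) \<Rightarrow> 'i set \<Rightarrow> real" where
  "Dl p S I = (\<Sum>k\<in>I. \<Sum>j\<in>I. pdep p S k j)"

definition Mu :: "('a \<Rightarrow> real) \<Rightarrow> ('i \<Rightarrow> 'a set) \<Rightarrow> 'i set \<Rightarrow> real" where
  "Mu p S I = (\<Sum>k\<in>I. \<Prod>e\<in>S k. p e)"

lemma nd_mono_T: "T \<subseteq> T' \<Longrightarrow> nd S I T' \<le> nd S I T"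
  unfolding nd_def by auto

lemma nd_nonneg: "0 \<le> nd S I T" unfolding nd_def by simp
lemma nd_le1: "nd S I T \<le> 1" unfolding nd_def by simp

lemma Ew_nonneg:
  assumes "\<And>e. e \<in> E \<Longrightarrow> 0 \<le> p e \<and> p e \<le> 1" "\<And>T. T \<subseteq> E \<Longrightarrow> 0 \<le> f T"
  shows "0 \<le> Ew E p f"
  unfolding Ew_def using assms by (intro sum_nonneg mult_nonneg_nonneg wt_nonneg) auto

lemma janson_step:
  assumes E: "finite E" and p: "\<And>e. e \<in> E \<Longrightarrow> 0 \<le> p e \<and> p e \<le> 1"
    and I: "finite I" "i \<notin> I" and S: "\<And>j. j \<in> insert i I \<Longrightarrow> S j \<subseteq> E"
  shows "Ew E p (nd S (insert i I)) \<le>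
     Ew E p (nd S I) * (1 - (\<Prod>e\<in>S i. p e) + (\<Sum>j\<in>I. of_bool (S i \<inter> S j \<noteq> {}) * (\<Prod>e\<in>S i \<union> S j. p e)))"
proof -
  define b :: "_ \<Rightarrow> real" where "b T = of_bool (S i \<subseteq> T)" for T
  define I1 where "I1 = {j\<in>I. S i \<inter> S j \<noteq> {}}"
  define I2 where "I2 = I - I1"
  define \<pi> where "\<pi> = (\<Prod>e\<in>S i. p e)"
  define \<sigma> where "\<sigma> = (\<Sum>j\<in>I. of_bool (S i \<inter> S j \<noteq> {}) * (\<Prod>e\<in>S i \<union> S j. p e))"
  define X where "X = Ew E p (\<lambda>T. b T * (1 - nd S I1 T))"
  have fin1: "finite I1" using I unfolding I1_def by auto
  have e1: "nd S (insert i I) T = nd S I T - b T * nd S I T" for T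
    unfolding nd_def b_def by auto
  have e2: "b T * nd S I T = b T * nd S I2 T - b T * (1 - nd S I1 T) * nd S I2 T" for T
    unfolding nd_def b_def I1_def I2_def by auto
  have ind: "Ew E p (\<lambda>T. b T * nd S I2 T) = \<pi> * Ew E p (nd S I2)"
    unfolding b_def \<pi>_def
  proof (rule Ew_indep[OF E])
    show "S i \<subseteq> E" using S by auto
    fix T
    have "\<forall>j\<in>I2. (S j \<subseteq> T) = (S j \<subseteq> T - S i)" unfolding I2_def I1_def by auto
    then show "nd S I2 T = nd S I2 (T - S i)" unfolding nd_def by auto
  qed
  have har: "Ew E p (\<lambda>T. (b T * (1 - nd S I1 T)) * nd S I2 T) \<le> X * Ew E p (nd S I2)"
    unfolding X_def
  proof (rule harris[OF E p])
    fix A B assume "A \<subseteq> B" "B \<subseteq> E"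
    then show "b A * (1 - nd S I1 A) \<le> b B * (1 - nd S I1 B)"
      unfolding b_def nd_def by (auto; blast)
    show "nd S I2 B \<le> nd S I2 A" using \<open>A \<subseteq> B\<close> by (rule nd_mono_T)
  qed
  have X1: "X \<le> \<sigma>"
  proof -
    have "X \<le> Ew E p (\<lambda>T. \<Sum>j\<in>I1. of_bool (S i \<union> S j \<subseteq> T))"
      unfolding X_def
    proof (rule Ew_mono[OF p])
      fix T
      show "b T * (1 - nd S I1 T) \<le> (\<Sum>j\<in>I1. of_bool (S i \<union> S j \<subseteq> T))"
      proof (cases "b T * (1 - nd S I1 T) = 0")
        case True
        show ?thesis by (subst True) (rule sum_nonneg, simp)
        next
        case False
        then obtain j where j: "j \<in> I1" "S j \<subseteq> T" "S i \<subseteq> T" unfolding b_def nd_def by (auto split: if_splits)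
        have "b T * (1 - nd S I1 T) \<le> 1" unfolding b_def nd_def by auto
        also have "(1::real) = of_bool (S i \<union> S j \<subseteq> T)" using j by simp
        also have "\<dots> \<le> (\<Sum>j\<in>I1. of_bool (S i \<union> S j \<subseteq> T))"
          using j fin1 by (intro member_le_sum[where f="\<lambda>j. of_bool (S i \<union> S j \<subseteq> T)"]) auto
        finally show ?thesis .
      qed
    qed
    also have "\<dots> = (\<Sum>j\<in>I1. \<Prod>e\<in>S i \<union> S j. p e)"
      unfolding Ew_sum
    proof (rule sum.cong[OF refl])
      fix j assume "j \<in> I1"
      then have "S i \<union> S j \<subseteq> E" using S unfolding I1_def by auto
      then show "Ew E p (\<lambda>T. of_bool (S i \<union> S j \<subseteq> T)) = (\<Prod>e\<in>S i \<union> S j. p e)"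
        by (rule Ew_prob_sub[OF E])
    qed
    also have "\<dots> = \<sigma>"
      unfolding \<sigma>_def I1_def using I by (subst sum.inter_filter) (simp_all add: of_bool_def, intro sum.cong refl, simp)
    finally show ?thesis .
  qed
  have X2: "X \<le> \<pi>"
  proof -
    have "X \<le> Ew E p b" unfolding X_def
      by (rule Ew_mono[OF p]) (auto simp: b_def nd_def)
    also have "\<dots> = \<pi>" unfolding b_def \<pi>_def using S E by (simp add: Ew_prob_sub)
    finally show ?thesis .
  qed
  have N2: "Ew E p (nd S I) \<le> Ew E p (nd S I2)"
    by (rule Ew_mono[OF p]) (auto simp: nd_def I2_def)
  have N0: "0 \<le> Ew E p (nd S I)" by (rule Ew_nonneg[OF p nd_nonneg])
  have "Ew E p (\<lambda>T. b T * nd S I T) \<ge> Ew E p (nd S I2) * (\<pi> - X)"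
  proof -
    have "Ew E p (\<lambda>T. b T * nd S I T) = Ew E p (\<lambda>T. b T * nd S I2 T) - Ew E p (\<lambda>T. (b T * (1 - nd S I1 T)) * nd S I2 T)"
      by (subst Ew_diff[symmetric]) (simp add: e2)
    then show ?thesis using ind har by (simp add: algebra_simps)
  qed
  moreover have "Ew E p (nd S I2) * (\<pi> - X) \<ge> Ew E p (nd S I) * (\<pi> - \<sigma>)"
  proof -
    have "Ew E p (nd S I) * (\<pi> - \<sigma>) \<le> Ew E p (nd S I) * (\<pi> - X)"
      using N0 X1 by (intro mult_left_mono) auto
    also have "\<dots> \<le> Ew E p (nd S I2) * (\<pi> - X)"
      using N2 X2 by (intro mult_right_mono) auto
    finally show ?thesis .
  qed
  ultimately have low: "Ew E p (\<lambda>T. b T * nd S I T) \<ge> Ew E p (nd S I) * (\<pi> - \<sigma>)" by linarith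
  have "Ew E p (nd S (insert i I)) = Ew E p (nd S I) - Ew E p (\<lambda>T. b T * nd S I T)"
    by (subst Ew_diff[symmetric], rule arg_cong[where f="Ew E p"], rule ext, rule e1)
  also have "\<dots> \<le> Ew E p (nd S I) * (1 - \<pi> + \<sigma>)" using low by (simp add: algebra_simps)
  finally show ?thesis unfolding \<pi>_def \<sigma>_def .
qed

lemma pdep_sym: "pdep p S k j = pdep p S j k"
  unfolding pdep_def by (simp add: Int_commute Un_commute eq_commute)

lemma Dl_insert:
  assumes "finite I" "i \<notin> I"
  shows "Dl p S (insert i I) = Dl p S I + 2 * (\<Sum>j\<in>I. of_bool (S i \<inter> S j \<noteq> {}) * (\<Prod>e\<in>S i \<union> S j. p e))"
proof -
  have a: "(\<Sum>j\<in>I. pdep p S i j) = (\<Sum>j\<in>I. of_bool (S i \<inter> S j \<noteq> {}) * (\<Prod>e\<in>S i \<union> S j. p e))"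
    using assms by (intro sum.cong refl) (auto simp: pdep_def)
  have b: "(\<Sum>k\<in>I. pdep p S k i) = (\<Sum>j\<in>I. pdep p S i j)"
    by (intro sum.cong refl) (rule pdep_sym)
  have "Dl p S (insert i I) = (pdep p S i i + (\<Sum>j\<in>I. pdep p S i j)) + (\<Sum>k\<in>I. pdep p S k i + (\<Sum>j\<in>I. pdep p S k j))"
    unfolding Dl_def using assms by (simp add: sum.insert)
  also have "\<dots> = Dl p S I + 2 * (\<Sum>j\<in>I. pdep p S i j)"
    unfolding Dl_def by (simp only: sum.distrib b) (simp add: pdep_def)
  finally show ?thesis using a by simp
qed

lemma janson_basic:
  assumes E: "finite E" and p: "\<And>e. e \<in> E \<Longrightarrow> 0 \<le> p e \<and> p e \<le> 1"
    and I: "finite I" and S: "\<And>j. j \<in> I \<Longrightarrow> S j \<subseteq> E"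
  shows "Ew E p (nd S I) \<le> exp (- Mu p S I + Dl p S I / 2)"
  using I S
proof (induction I rule: finite_induct)
  case empty
  then show ?case using E by (simp add: nd_def Ew_const Mu_def Dl_def)
next
  case (insert i I)
  define \<sigma> where "\<sigma> = (\<Sum>j\<in>I. of_bool (S i \<inter> S j \<noteq> {}) * (\<Prod>e\<in>S i \<union> S j. p e))"
  define \<pi> where "\<pi> = (\<Prod>e\<in>S i. p e)"
  have N0: "0 \<le> Ew E p (nd S I)" by (rule Ew_nonneg[OF p nd_nonneg])
  have IH: "Ew E p (nd S I) \<le> exp (- Mu p S I + Dl p S I / 2)"
    using insert by auto
  have "Ew E p (nd S (insert i I)) \<le> Ew E p (nd S I) * (1 - \<pi> + \<sigma>)"
    unfolding \<pi>_def \<sigma>_def using insert by (intro janson_step[OF E p]) auto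
  also have "\<dots> \<le> Ew E p (nd S I) * exp (- \<pi> + \<sigma>)"
  proof -
    have "1 - \<pi> + \<sigma> \<le> exp (- \<pi> + \<sigma>)" using exp_ge_add_one_self[of "- \<pi> + \<sigma>"] by linarith
    then show ?thesis using N0 by (intro mult_left_mono) auto
  qed
  also have "\<dots> \<le> exp (- Mu p S I + Dl p S I / 2) * exp (- \<pi> + \<sigma>)"
    using IH by (intro mult_right_mono) auto
  also have "\<dots> = exp ((- Mu p S I + Dl p S I / 2) + (- \<pi> + \<sigma>))"
    by (simp only: exp_add)
  also have "\<dots> = exp (- Mu p S (insert i I) + Dl p S (insert i I) / 2)"
  proof (rule arg_cong[where f=exp])
    have "Dl p S (insert i I) = Dl p S I + 2 * \<sigma>" unfolding \<sigma>_def using insert.hyps by (rule Dl_insert)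
    moreover have "Mu p S (insert i I) = \<pi> + Mu p S I" unfolding Mu_def \<pi>_def using insert.hyps by simp
    ultimately show "- Mu p S I + Dl p S I / 2 + (- \<pi> + \<sigma>) = - Mu p S (insert i I) + Dl p S (insert i I) / 2"
      by simp
  qed
  finally show ?case .
qed

lemma Ew_divide: "Ew E p (\<lambda>T. f T / c) = Ew E p f / c"
  unfolding Ew_def by (simp add: sum_divide_distrib)

lemma sum_restrict_K:
  assumes "finite I" "K \<subseteq> I"
  shows "(\<Sum>k\<in>I. of_bool (k \<in> K) * f k) = (sum f K :: real)"
proof -
  have "(\<Sum>k\<in>I. of_bool (k \<in> K) * f k) = (\<Sum>k\<in>I. if k \<in> K then f k else 0)"
    by (intro sum.cong) auto
  also have "\<dots> = sum f (I \<inter> K)" using assms by (simp add: sum.inter_restrict)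
  also have "I \<inter> K = K" using assms by auto
  finally show ?thesis .
qed

lemma exists_ge_Ew:
  assumes "finite E" "\<And>e. e \<in> E \<Longrightarrow> 0 \<le> p e \<and> p e \<le> 1"
  shows "\<exists>T\<subseteq>E. Ew E p h \<le> h T"
proof -
  define M where "M = Max (h ` Pow E)"
  have "M \<in> h ` Pow E" unfolding M_def using assms by (intro Max_in) auto
  then obtain T where T: "T \<subseteq> E" "M = h T" by auto
  have "Ew E p h \<le> Ew E p (\<lambda>_. M)"
    using assms unfolding M_def by (intro Ew_mono) (auto intro!: Max_ge)
  also have "\<dots> = M" using assms by (simp add: Ew_const)
  finally show ?thesis using T by auto
qed

lemma janson_t:
  assumes E: "finite E" and p: "\<And>e. e \<in> E \<Longrightarrow> 0 \<le> p e \<and> p e \<le> 1"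
    and I: "finite I" and S: "\<And>j. j \<in> I \<Longrightarrow> S j \<subseteq> E"
    and t: "0 \<le> t" "t \<le> 1"
  shows "Ew E p (nd S I) \<le> exp (- (t * Mu p S I - t^2 * Dl p S I / 2))"
proof -
  define h where "h K = Mu p S K - Dl p S K / 2" for K
  have avg: "Ew I (\<lambda>_. t) h = t * Mu p S I - t^2 * Dl p S I / 2"
  proof -
    have hK: "h K = (\<Sum>k\<in>I. of_bool (k \<in> K) * (\<Prod>e\<in>S k. p e))
       - (\<Sum>k\<in>I. \<Sum>j\<in>I. of_bool (k \<in> K \<and> j \<in> K) * pdep p S k j) / 2" if "K \<subseteq> I" for K
    proof -
      have "Mu p S K = (\<Sum>k\<in>I. of_bool (k \<in> K) * (\<Prod>e\<in>S k. p e))"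
        unfolding Mu_def by (rule sum_restrict_K[OF I that, symmetric])
      moreover have "Dl p S K = (\<Sum>k\<in>I. \<Sum>j\<in>I. of_bool (k \<in> K \<and> j \<in> K) * pdep p S k j)"
      proof -
        have "Dl p S K = (\<Sum>k\<in>I. of_bool (k \<in> K) * (\<Sum>j\<in>I. of_bool (j \<in> K) * pdep p S k j))"
          unfolding Dl_def using that I by (simp add: sum_restrict_K Int_absorb1)
        then show ?thesis by (simp add: sum_distrib_left mult.assoc of_bool_conj)
      qed
      ultimately show ?thesis unfolding h_def by simp
    qed
    have "Ew I (\<lambda>_. t) h = Ew I (\<lambda>_. t) (\<lambda>K. (\<Sum>k\<in>I. of_bool (k \<in> K) * (\<Prod>e\<in>S k. p e))
       - (\<Sum>k\<in>I. \<Sum>j\<in>I. of_bool (k \<in> K \<and> j \<in> K) * pdep p S k j) / 2)"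
      by (rule Ew_cong) (rule hK)
    also have "\<dots> = (\<Sum>k\<in>I. t * (\<Prod>e\<in>S k. p e)) - (\<Sum>k\<in>I. \<Sum>j\<in>I. t^2 * pdep p S k j) / 2"
    proof -
      have 1: "Ew I (\<lambda>_. t) (\<lambda>K. of_bool (k \<in> K) * c) = t * c" if "k \<in> I" for k c
        using Ew_prob_sub[OF I, of "{k}" "\<lambda>_. t"] that Ew_cmult[of I "\<lambda>_. t" c "\<lambda>K. of_bool (k \<in> K)"]
        by (simp add: mult.commute)
      have 2: "Ew I (\<lambda>_. t) (\<lambda>K. of_bool (k \<in> K \<and> j \<in> K) * pdep p S k j) = t^2 * pdep p S k j"
        if "k \<in> I" "j \<in> I" for k j
      proof (cases "j = k")
        case True then show ?thesis using I by (simp add: pdep_def Ew_const)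
      next
        case False
        then have "Ew I (\<lambda>_. t) (\<lambda>K. of_bool (k \<in> K \<and> j \<in> K)) = t^2"
          using Ew_prob_sub[OF I, of "{k, j}" "\<lambda>_. t"] that by (simp add: power2_eq_square)
        then show ?thesis using Ew_cmult[of I "\<lambda>_. t" "pdep p S k j" "\<lambda>K. of_bool (k \<in> K \<and> j \<in> K)"]
          by (simp add: mult.commute)
      qed
      have A: "Ew I (\<lambda>_. t) (\<lambda>K. \<Sum>k\<in>I. of_bool (k \<in> K) * (\<Prod>e\<in>S k. p e)) = (\<Sum>k\<in>I. t * (\<Prod>e\<in>S k. p e))"
        unfolding Ew_sum by (intro sum.cong refl 1)
      have B: "Ew I (\<lambda>_. t) (\<lambda>K. \<Sum>k\<in>I. \<Sum>j\<in>I. of_bool (k \<in> K \<and> j \<in> K) * pdep p S k j) = (\<Sum>k\<in>I. \<Sum>j\<in>I. t^2 * pdep p S k j)"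
        unfolding Ew_sum by (intro sum.cong refl 2)
      show ?thesis
        by (simp only: Ew_diff Ew_divide A B)
    qed
    also have "\<dots> = t * Mu p S I - t^2 * Dl p S I / 2"
      by (simp add: Mu_def Dl_def sum_distrib_left)
    finally show ?thesis .
  qed
  obtain K where K: "K \<subseteq> I" "Ew I (\<lambda>_. t) h \<le> h K"
    using exists_ge_Ew[OF I, of "\<lambda>_. t" h] t by auto
  have "Ew E p (nd S I) \<le> Ew E p (nd S K)"
    by (rule Ew_mono[OF p]) (use K in \<open>auto simp: nd_def\<close>)
  also have "\<dots> \<le> exp (- Mu p S K + Dl p S K / 2)"
    using K I S by (intro janson_basic[OF E p]) (auto intro: finite_subset)
  also have "\<dots> \<le> exp (- (t * Mu p S I - t^2 * Dl p S I / 2))"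
    using K avg unfolding h_def by simp
  finally show ?thesis .
qed

lemma Dl_nonneg:
  assumes "\<And>e. e \<in> E \<Longrightarrow> 0 \<le> p e \<and> p e \<le> 1" "\<And>j. j \<in> I \<Longrightarrow> S j \<subseteq> E"
  shows "0 \<le> Dl p S I"
  unfolding Dl_def pdep_def using assms
  by (intro sum_nonneg mult_nonneg_nonneg prod_nonneg) auto

lemma real_ineq1:
  fixes \<mu> d :: real
  assumes "0 < \<mu>" "0 \<le> d" "d \<le> \<mu>"
  shows "\<mu>^2 / (2 * (\<mu> + d)) \<le> \<mu> - d / 2"
proof -
  have "\<mu>^2 \<le> (\<mu> - d / 2) * (2 * (\<mu> + d))"
  proof -
    have "d * d \<le> \<mu> * \<mu>" using assms by (intro mult_mono) auto
    moreover have "0 \<le> \<mu> * d" using assms by simp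
    ultimately show ?thesis by (simp add: algebra_simps power2_eq_square)
  qed
  then show ?thesis using assms by (subst pos_divide_le_eq) auto
qed

lemma real_ineq2:
  fixes \<mu> d :: real
  assumes "0 < \<mu>" "\<mu> < d"
  shows "\<mu>^2 / (2 * (\<mu> + d)) \<le> (\<mu> / d) * \<mu> - (\<mu> / d)^2 * d / 2"
proof -
  have "(\<mu> / d) * \<mu> - (\<mu> / d)^2 * d / 2 = \<mu>^2 / (2 * d)"
    using assms by (simp add: field_simps power2_eq_square)
  also have "\<mu>^2 / (2 * (\<mu> + d)) \<le> \<mu>^2 / (2 * d)"
    using assms by (intro divide_left_mono) auto
  ultimately show ?thesis by simp
qed

lemma D_eq:
  assumes I: "finite I" and Sne: "\<And>j. j \<in> I \<Longrightarrow> S j \<noteq> {}"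
  shows "(\<Sum>k\<in>I. \<Sum>j\<in>I. of_bool (S k \<inter> S j \<noteq> {}) * (\<Prod>e\<in>S k \<union> S j. p e)) = Mu p S I + Dl p S I"
proof -
  have "(\<Sum>j\<in>I. of_bool (S k \<inter> S j \<noteq> {}) * (\<Prod>e\<in>S k \<union> S j. p e)) = (\<Prod>e\<in>S k. p e) + (\<Sum>j\<in>I. pdep p S k j)"
    if k: "k \<in> I" for k
  proof -
    have "(\<Sum>j\<in>I. of_bool (S k \<inter> S j \<noteq> {}) * (\<Prod>e\<in>S k \<union> S j. p e))
        = (\<Sum>j\<in>I. of_bool (j = k) * (\<Prod>e\<in>S k. p e) + pdep p S k j)"
      using Sne[OF k] by (intro sum.cong refl) (auto simp: pdep_def)
    also have "\<dots> = (\<Prod>e\<in>S k. p e) + (\<Sum>j\<in>I. pdep p S k j)"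
    proof -
      have "(\<Sum>j\<in>I. of_bool (j = k) * (\<Prod>e\<in>S k. p e)) = (\<Sum>j\<in>I. if j = k then (\<Prod>e\<in>S k. p e) else 0)"
        by (intro sum.cong) auto
      also have "\<dots> = (\<Prod>e\<in>S k. p e)" using k I by (simp add: sum.delta)
      finally show ?thesis by (simp add: sum.distrib)
    qed
    finally show ?thesis .
  qed
  then show ?thesis unfolding Mu_def Dl_def by (simp add: sum.distrib)
qed

lemma janson_final:
  assumes E: "finite E" and p: "\<And>e. e \<in> E \<Longrightarrow> 0 \<le> p e \<and> p e \<le> 1"
    and I: "finite I" and S: "\<And>j. j \<in> I \<Longrightarrow> S j \<subseteq> E" and Sne: "\<And>j. j \<in> I \<Longrightarrow> S j \<noteq> {}"
    and mu: "0 < Mu p S I"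
    and D: "D = (\<Sum>k\<in>I. \<Sum>j\<in>I. of_bool (S k \<inter> S j \<noteq> {}) * (\<Prod>e\<in>S k \<union> S j. p e))"
  shows "Ew E p (nd S I) \<le> exp (- (Mu p S I ^ 2 / (2 * D)))"
proof -
  define \<mu> where "\<mu> = Mu p S I"
  define d where "d = Dl p S I"
  have d0: "0 \<le> d" unfolding d_def by (rule Dl_nonneg[OF p S])
  have Dmu: "D = \<mu> + d"
  proof -
    have "(\<Sum>j\<in>I. of_bool (S k \<inter> S j \<noteq> {}) * (\<Prod>e\<in>S k \<union> S j. p e)) = (\<Prod>e\<in>S k. p e) + (\<Sum>j\<in>I. pdep p S k j)"
      if k: "k \<in> I" for k
    proof -
      have "(\<Sum>j\<in>I. of_bool (S k \<inter> S j \<noteq> {}) * (\<Prod>e\<in>S k \<union> S j. p e))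
          = (\<Sum>j\<in>I. of_bool (j = k) * (\<Prod>e\<in>S k. p e) + pdep p S k j)"
        using Sne[OF k] by (intro sum.cong refl) (auto simp: pdep_def)
      also have "\<dots> = (\<Prod>e\<in>S k. p e) + (\<Sum>j\<in>I. pdep p S k j)"
      proof -
        have "(\<Sum>j\<in>I. of_bool (j = k) * (\<Prod>e\<in>S k. p e)) = (\<Sum>j\<in>I. if j = k then (\<Prod>e\<in>S k. p e) else 0)"
          by (intro sum.cong) auto
        also have "\<dots> = (\<Prod>e\<in>S k. p e)" using k I by (simp add: sum.delta)
        finally show ?thesis by (simp add: sum.distrib)
      qed
      finally show ?thesis .
    qed
    then show ?thesis unfolding D \<mu>_def d_def Mu_def Dl_def
      by (simp add: sum.distrib)
  qed
  show ?thesis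
  proof (cases "d \<le> \<mu>")
    case True
    have "Ew E p (nd S I) \<le> exp (- (1 * \<mu> - 1^2 * d / 2))"
      unfolding \<mu>_def d_def by (rule janson_t[OF E p I S]) auto
    also have "\<dots> \<le> exp (- (\<mu>^2 / (2 * D)))"
      using real_ineq1[of \<mu> d] True d0 mu Dmu unfolding \<mu>_def by simp
    finally show ?thesis unfolding \<mu>_def .
  next
    case False
    have "Ew E p (nd S I) \<le> exp (- ((\<mu> / d) * \<mu> - (\<mu> / d)^2 * d / 2))"
      unfolding \<mu>_def d_def using False d0 mu unfolding \<mu>_def d_def by (intro janson_t[OF E p I S]) auto
    also have "\<dots> \<le> exp (- (\<mu>^2 / (2 * D)))"
      using real_ineq2[of \<mu> d] False d0 mu Dmu unfolding \<mu>_def by simp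
    finally show ?thesis unfolding \<mu>_def .
  qed
qed

lemma janson_final2:
  assumes E: "finite E" and p: "\<And>e. e \<in> E \<Longrightarrow> 0 \<le> p e \<and> p e \<le> 1"
    and I: "finite I" and S: "\<And>j. j \<in> I \<Longrightarrow> S j \<subseteq> E" and Sne: "\<And>j. j \<in> I \<Longrightarrow> S j \<noteq> {}"
    and mu: "0 < Mu p S I" and K: "0 < K" and c: "0 < c"
    and DK: "(\<Sum>k\<in>I. \<Sum>j\<in>I. of_bool (S k \<inter> S j \<noteq> {}) * (\<Prod>e\<in>S k \<union> S j. p e)) * K \<le> c * Mu p S I ^ 2"
  shows "Ew E p (nd S I) \<le> exp (- (K / (2 * c)))"
proof -
  define D where "D = (\<Sum>k\<in>I. \<Sum>j\<in>I. of_bool (S k \<inter> S j \<noteq> {}) * (\<Prod>e\<in>S k \<union> S j. p e))"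
  have "D = Mu p S I + Dl p S I" unfolding D_def by (rule D_eq[OF I Sne])
  moreover have "0 \<le> Dl p S I" by (rule Dl_nonneg[OF p S])
  ultimately have D0: "0 < D" using mu by simp
  have "Ew E p (nd S I) \<le> exp (- (Mu p S I ^ 2 / (2 * D)))"
    by (rule janson_final[OF E p I S Sne mu D_def])
  also have "\<dots> \<le> exp (- (K / (2 * c)))"
  proof -
    have "K / (2 * c) \<le> Mu p S I ^ 2 / (2 * D)"
      using D0 c DK unfolding D_def[symmetric] by (simp add: frac_le_eq field_simps)
    then show ?thesis by simp
  qed
  finally show ?thesis .
qed


lemma finite_all_edges: "finite V \<Longrightarrow> finite (all_edges V)"
  unfolding all_edges_def by (rule finite_subset[of _ "Pow V"]) auto

lemma pmf_gnp:
  assumes "0 \<le> p" "p \<le> 1"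
  shows "pmf (gnp n p) X = (if X \<subseteq> all_edges {1..n} then wt (all_edges {1..n}) (\<lambda>_. p) X else 0)"
proof -
  define A where "A = all_edges {1..n}"
  have finA: "finite A" unfolding A_def by (rule finite_all_edges) simp
  define M where "M = Pi_pmf A False (\<lambda>_. bernoulli_pmf p)"
  define f where "f = (\<lambda>g. {e \<in> A. g e})"
  have gnp: "gnp n p = map_pmf f M" unfolding gnp_def A_def f_def M_def ..
  have setM: "set_pmf M \<subseteq> {g. \<forall>x. x \<notin> A \<longrightarrow> g x = False}"
    unfolding M_def by (rule set_Pi_pmf_subset[OF finA])
  show ?thesis
  proof (cases "X \<subseteq> A")
    case True
    define g where "g = (\<lambda>e. e \<in> X)"
    have fg: "f g = X" unfolding f_def g_def using True by auto
    have inj: "inj_on f (set_pmf M)"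
    proof (rule inj_onI)
      fix a b assume "a \<in> set_pmf M" "b \<in> set_pmf M" "f a = f b"
      show "a = b"
      proof (rule ext)
        fix x show "a x = b x"
        proof (cases "x \<in> A")
          case True
          have "(x \<in> f a) = (x \<in> f b)" using \<open>f a = f b\<close> by simp
          then show ?thesis using True unfolding f_def by simp
        next
          case False
          then show ?thesis using setM \<open>a \<in> set_pmf M\<close> \<open>b \<in> set_pmf M\<close> by auto
        qed
      qed
    qed
    have pg: "pmf M g = wt A (\<lambda>_. p) X"
      unfolding M_def wt_def g_def using True assms finA by (subst pmf_Pi[OF finA]) (auto intro!: prod.cong)
    have "pmf (gnp n p) X = pmf M g"
    proof (cases "g \<in> set_pmf M")
      case True
      then show ?thesis unfolding gnp fg[symmetric] by (rule pmf_map_inj[OF inj])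
    next
      case False
      then have "pmf M g = 0" by (simp add: set_pmf_eq)
      moreover have "X \<notin> set_pmf (gnp n p)"
      proof
        assume "X \<in> set_pmf (gnp n p)"
        then obtain h where h: "h \<in> set_pmf M" "X = f h" unfolding gnp by auto
        have "h = g"
        proof (rule ext)
          fix e show "h e = g e"
          proof (cases "e \<in> A")
            case True then show ?thesis using h unfolding f_def g_def by simp
          next
            case False then show ?thesis using h setM \<open>X \<subseteq> A\<close> unfolding g_def by auto
          qed
        qed
        then show False using h False by simp
      qed
      ultimately show ?thesis by (simp add: set_pmf_eq)
    qed
    then show ?thesis using pg True unfolding A_def by simp
  next
    case False
    then have "X \<notin> set_pmf (gnp n p)" unfolding gnp f_def by auto
    then show ?thesis using False unfolding A_def by (simp add: set_pmf_eq)
  qed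
qed

lemma set_pmf_gnp: "set_pmf (gnp n p) \<subseteq> Pow (all_edges {1..n})"
  unfolding gnp_def by auto

lemma prob_finite_support:
  assumes "set_pmf M \<subseteq> F" "finite F"
  shows "measure_pmf.prob M A = sum (pmf M) (A \<inter> F)"
proof -
  have "measure_pmf.prob M A = measure_pmf.prob M ((A \<inter> F) \<inter> set_pmf M)"
  proof -
    have "(A \<inter> F) \<inter> set_pmf M = A \<inter> set_pmf M" using assms by auto
    then show ?thesis using measure_Int_set_pmf[of M A] by simp
  qed
  also have "\<dots> = measure_pmf.prob M (A \<inter> F)" by (rule measure_Int_set_pmf)
  also have "\<dots> = sum (pmf M) (A \<inter> F)" using assms by (intro measure_measure_pmf_finite) auto
  finally show ?thesis .
qed

definition EE :: "nat \<Rightarrow> (nat set + nat set) set" where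
  "EE n = Inl ` all_edges {1..n} \<union> Inr ` all_edges {1..n}"

definition pp :: "real \<Rightarrow> real \<Rightarrow> nat set + nat set \<Rightarrow> real" where
  "pp p1 p2 = case_sum (\<lambda>_. p1) (\<lambda>_. p2)"

lemma pp_Inl[simp]: "pp p1 p2 (Inl x) = p1" unfolding pp_def by simp
lemma pp_Inr[simp]: "pp p1 p2 (Inr x) = p2" unfolding pp_def by simp

lemma split_sum_set: "Inl ` (Inl -` a) \<union> Inr ` (Inr -` a) = a"
proof (rule set_eqI)
  fix x show "(x \<in> Inl ` (Inl -` a) \<union> Inr ` (Inr -` a)) = (x \<in> a)" by (cases x) auto
qed

lemma vimage_Inl: "Inl -` (Inl ` X \<union> Inr ` Y) = X" by auto
lemma vimage_Inr: "Inr -` (Inl ` X \<union> Inr ` Y) = Y" by auto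

lemma finite_EE: "finite (EE n)"
  unfolding EE_def by (intro finite_UnI finite_imageI finite_all_edges) auto

lemma wt_EE:
  assumes "T \<subseteq> EE n"
  shows "wt (EE n) (pp p1 p2) T = wt (all_edges {1..n}) (\<lambda>_. p1) (Inl -` T) * wt (all_edges {1..n}) (\<lambda>_. p2) (Inr -` T)"
proof -
  define A where "A = all_edges {1..n}"
  have finA: "finite A" unfolding A_def by (rule finite_all_edges) simp
  have "wt (EE n) (pp p1 p2) T = (\<Prod>e\<in>Inl ` A. if e \<in> T then pp p1 p2 e else 1 - pp p1 p2 e) *
      (\<Prod>e\<in>Inr ` A. if e \<in> T then pp p1 p2 e else 1 - pp p1 p2 e)"
    unfolding wt_def EE_def A_def[symmetric] using finA by (intro prod.union_disjoint) auto
  also have "\<dots> = wt A (\<lambda>_. p1) (Inl -` T) * wt A (\<lambda>_. p2) (Inr -` T)"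
    unfolding wt_def by (simp add: prod.reindex cong: if_cong)
  finally show ?thesis unfolding A_def .
qed

lemma bridge:
  assumes "0 \<le> p1" "p1 \<le> 1" "0 \<le> p2" "p2 \<le> 1"
  shows "measure_pmf.prob (pair_pmf (gnp n p1) (gnp n p2)) {(X, Y). P X Y}
       = Ew (EE n) (pp p1 p2) (\<lambda>T. of_bool (P (Inl -` T) (Inr -` T)))"
proof -
  define A where "A = all_edges {1..n}"
  have finA: "finite A" unfolding A_def by (rule finite_all_edges) simp
  have "measure_pmf.prob (pair_pmf (gnp n p1) (gnp n p2)) {(X, Y). P X Y}
      = sum (pmf (pair_pmf (gnp n p1) (gnp n p2))) ({(X, Y). P X Y} \<inter> (Pow A \<times> Pow A))"
    using set_pmf_gnp finA unfolding A_def by (intro prob_finite_support) auto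
  also have "\<dots> = (\<Sum>xy\<in>Pow A \<times> Pow A. wt A (\<lambda>_. p1) (fst xy) * wt A (\<lambda>_. p2) (snd xy) * of_bool (P (fst xy) (snd xy)))"
  proof -
    have "({(X, Y). P X Y} \<inter> (Pow A \<times> Pow A)) = {xy \<in> Pow A \<times> Pow A. P (fst xy) (snd xy)}" by auto
    moreover have "sum (pmf (pair_pmf (gnp n p1) (gnp n p2))) {xy \<in> Pow A \<times> Pow A. P (fst xy) (snd xy)}
        = (\<Sum>xy\<in>Pow A \<times> Pow A. if P (fst xy) (snd xy) then pmf (pair_pmf (gnp n p1) (gnp n p2)) xy else 0)"
      using finA by (intro sum.inter_filter) auto
    moreover have "\<dots> = (\<Sum>xy\<in>Pow A \<times> Pow A. wt A (\<lambda>_. p1) (fst xy) * wt A (\<lambda>_. p2) (snd xy) * of_bool (P (fst xy) (snd xy)))"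
      using assms by (intro sum.cong refl) (auto simp: pmf_pair pmf_gnp A_def)
    ultimately show ?thesis by simp
  qed
  also have "\<dots> = (\<Sum>T\<in>Pow (EE n). wt A (\<lambda>_. p1) (Inl -` T) * wt A (\<lambda>_. p2) (Inr -` T) * of_bool (P (Inl -` T) (Inr -` T)))"
  proof -
    have bij: "bij_betw (\<lambda>T. (Inl -` T, Inr -` T)) (Pow (EE n)) (Pow A \<times> Pow A)"
    proof (rule bij_betw_byWitness[where f'="\<lambda>(X, Y). Inl ` X \<union> Inr ` Y"])
      show "\<forall>a\<in>Pow (EE n). (case (Inl -` a, Inr -` a) of (X, Y) \<Rightarrow> Inl ` X \<union> Inr ` Y) = a"
        by (intro ballI) (simp only: prod.case split_sum_set)
      show "\<forall>a\<in>Pow A \<times> Pow A. (Inl -` (case a of (X, Y) \<Rightarrow> Inl ` X \<union> Inr ` Y), Inr -` (case a of (X, Y) \<Rightarrow> Inl ` X \<union> Inr ` Y)) = a"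
        by (auto simp: vimage_Inl vimage_Inr)
      show "(\<lambda>T. (Inl -` T, Inr -` T)) ` Pow (EE n) \<subseteq> Pow A \<times> Pow A"
        unfolding EE_def A_def by blast
      show "(\<lambda>(X, Y). Inl ` X \<union> Inr ` Y) ` (Pow A \<times> Pow A) \<subseteq> Pow (EE n)"
        unfolding EE_def A_def by auto
    qed
    show ?thesis
      using sum.reindex_bij_betw[OF bij, of "\<lambda>xy. wt A (\<lambda>_. p1) (fst xy) * wt A (\<lambda>_. p2) (snd xy) * of_bool (P (fst xy) (snd xy))"]
      by simp
  qed
  also have "\<dots> = Ew (EE n) (pp p1 p2) (\<lambda>T. of_bool (P (Inl -` T) (Inr -` T)))"
    unfolding Ew_def by (intro sum.cong refl) (simp add: wt_EE A_def)
  finally show ?thesis .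
qed


definition goodp :: "nat \<Rightarrow> (nat \<times> nat \<Rightarrow> nat) \<Rightarrow> (nat \<Rightarrow> (nat \<times> nat) set) \<Rightarrow> bool" where
  "goodp m \<phi> C \<longleftrightarrow> (\<forall>i\<in>{1..m}. \<forall>j\<in>{1..m}. \<forall>a\<in>C i. \<forall>b\<in>C j. \<phi> a = \<phi> b \<longrightarrow> i = j \<and> a = b)"

lemma goodpD:
  assumes "goodp m \<phi> C" "i \<in> {1..m}" "j \<in> {1..m}" "a \<in> C i" "b \<in> C j" "\<phi> a = \<phi> b"
  shows "i = j \<and> a = b"
  using assms unfolding goodp_def by blast

lemma goodp_inj:
  assumes "goodp m \<phi> C" "c \<in> PiE {1..m} C"
  shows "inj_on (\<phi> \<circ> c) {1..m}"
proof (rule inj_onI)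
  fix i j assume ij: "i \<in> {1..m}" "j \<in> {1..m}" "(\<phi> \<circ> c) i = (\<phi> \<circ> c) j"
  have "c i \<in> C i" "c j \<in> C j" using assms(2) ij by (auto simp: PiE_iff)
  then show "i = j" using goodpD[OF assms(1) ij(1,2)] ij(3) by simp
qed

lemma goodp_inj_img:
  assumes "goodp m \<phi> C" "c \<in> PiE {1..m} C" "G \<subseteq> Pow {1..m}"
  shows "inj_on (image (\<phi> \<circ> c)) G"
  using inj_on_image_Pow[OF goodp_inj[OF assms(1,2)]] assms(3) by (rule inj_on_subset)

lemma goodp_Int:
  assumes "goodp m \<phi> C" "c \<in> PiE {1..m} C" "d \<in> PiE {1..m} C" "G \<subseteq> Pow {1..m}"
  shows "image (\<phi> \<circ> c) ` G \<inter> image (\<phi> \<circ> d) ` G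
       = image (\<phi> \<circ> c) ` induced_edges G {i\<in>{1..m}. c i = d i}"
proof
  show "image (\<phi> \<circ> c) ` induced_edges G {i \<in> {1..m}. c i = d i} \<subseteq> image (\<phi> \<circ> c) ` G \<inter> image (\<phi> \<circ> d) ` G"
  proof
    fix x assume "x \<in> image (\<phi> \<circ> c) ` induced_edges G {i \<in> {1..m}. c i = d i}"
    then obtain e where e: "e \<in> G" "e \<subseteq> {i \<in> {1..m}. c i = d i}" "x = (\<phi> \<circ> c) ` e"
      unfolding induced_edges_def by auto
    then have "x = (\<phi> \<circ> d) ` e" by (auto intro!: image_cong)
    then have "x \<in> image (\<phi> \<circ> d) ` G" using e(1) by blast
    moreover have "x \<in> image (\<phi> \<circ> c) ` G" using e(1,3) by blast
    ultimately show "x \<in> image (\<phi> \<circ> c) ` G \<inter> image (\<phi> \<circ> d) ` G" by blast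
  qed
next
  show "image (\<phi> \<circ> c) ` G \<inter> image (\<phi> \<circ> d) ` G \<subseteq> image (\<phi> \<circ> c) ` induced_edges G {i \<in> {1..m}. c i = d i}"
  proof
    fix x assume "x \<in> image (\<phi> \<circ> c) ` G \<inter> image (\<phi> \<circ> d) ` G"
    then obtain e e' where e: "e \<in> G" "e' \<in> G" "x = (\<phi> \<circ> c) ` e" "x = (\<phi> \<circ> d) ` e'" by auto
    have "e \<subseteq> {i \<in> {1..m}. c i = d i}"
    proof
      fix i assume i: "i \<in> e"
      then have im: "i \<in> {1..m}" using e(1) assms(4) by blast
      have "\<phi> (c i) \<in> (\<phi> \<circ> c) ` e" using i by simp
      then have "\<phi> (c i) \<in> (\<phi> \<circ> d) ` e'" using e(3,4) by simp
      then obtain k where k: "k \<in> e'" "\<phi> (c i) = \<phi> (d k)" by auto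
      have km: "k \<in> {1..m}" using e(2) k(1) assms(4) by blast
      have "c i \<in> C i" "d k \<in> C k" using assms(2,3) im km by (auto simp: PiE_iff)
      then have "i = k \<and> c i = d k" using goodpD[OF assms(1) im km] k(2) by blast
      then show "i \<in> {i \<in> {1..m}. c i = d i}" using im by auto
    qed
    then show "x \<in> image (\<phi> \<circ> c) ` induced_edges G {i \<in> {1..m}. c i = d i}"
      using e unfolding induced_edges_def by auto
  qed
qed

lemma prod_pp:
  assumes "finite Xs" "finite Ys"
  shows "(\<Prod>e\<in>Inl ` Xs \<union> Inr ` Ys. pp p1 p2 e) = p1 ^ card Xs * p2 ^ card Ys"
proof -
  have "(\<Prod>e\<in>Inl ` Xs \<union> Inr ` Ys. pp p1 p2 e) = (\<Prod>e\<in>Inl ` Xs. pp p1 p2 e) * (\<Prod>e\<in>Inr ` Ys. pp p1 p2 e)"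
    using assms by (intro prod.union_disjoint) auto
  also have "\<dots> = p1 ^ card Xs * p2 ^ card Ys"
    by (simp add: prod.reindex card_image)
  finally show ?thesis .
qed

lemma card_agree:
  assumes "finite M" "J \<subseteq> M" "c \<in> PiE M C" "\<And>i. i \<in> M \<Longrightarrow> finite (C i)"
  shows "card {d \<in> PiE M C. \<forall>j\<in>J. d j = c j} = (\<Prod>i\<in>M - J. card (C i))"
proof -
  have "{d \<in> PiE M C. \<forall>j\<in>J. d j = c j} = PiE M (\<lambda>i. if i \<in> J then {c i} else C i)"
    using assms(2,3) by (auto simp: PiE_iff extensional_def split: if_splits)
  then have "card {d \<in> PiE M C. \<forall>j\<in>J. d j = c j} = (\<Prod>i\<in>M. card (if i \<in> J then {c i} else C i))"
    using assms by (simp add: card_PiE)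
  also have "\<dots> = (\<Prod>i\<in>M. if i \<in> J then 1 else card (C i))"
    by (intro prod.cong) auto
  also have "\<dots> = (\<Prod>i\<in>M - J. card (C i))"
  proof -
    have "(\<Prod>i\<in>M. if i \<in> J then 1 else card (C i)) = (\<Prod>i\<in>M - J. if i \<in> J then 1 else card (C i)) * (\<Prod>i\<in>J. if i \<in> J then 1 else card (C i))"
      by (rule prod.subset_diff[OF assms(2,1)])
    also have "\<dots> = (\<Prod>i\<in>M - J. card (C i))" by simp
    finally show ?thesis .
  qed
  finally show ?thesis .
qed


definition Sc :: "nat set set \<Rightarrow> nat set set \<Rightarrow> (nat \<Rightarrow> nat \<times> nat) \<Rightarrow> (nat set + nat set) set" where
  "Sc G H c = Inl ` (image (fst \<circ> c) ` G) \<union> Inr ` (image (snd \<circ> c) ` H)"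

definition CF :: "nat \<Rightarrow> nat \<Rightarrow> (nat \<Rightarrow> nat) \<Rightarrow> (nat \<Rightarrow> (nat \<times> nat) set) set" where
  "CF m n q = {C \<in> PiE {1..m} (\<lambda>i. {A. A \<subseteq> {1..n} \<times> {1..n} \<and> card A = q i}). goodp m fst C \<and> goodp m snd C}"

lemma sum_of_bool_card:
  assumes "finite I"
  shows "(\<Sum>d\<in>I. of_bool (P d) :: real) = real (card {d\<in>I. P d})"
proof -
  have "(\<Sum>d\<in>I. of_bool (P d) :: real) = (\<Sum>d\<in>I. if P d then 1 else 0)" by (intro sum.cong) auto
  also have "\<dots> = (\<Sum>d\<in>{d\<in>I. P d}. 1)" using assms by (rule sum.inter_filter[symmetric])
  also have "\<dots> = real (card {d\<in>I. P d})" by simp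
  finally show ?thesis .
qed

lemma img_all_edges:
  assumes "goodp m \<phi> C" "c \<in> PiE {1..m} C" "G \<subseteq> all_edges {1..m}"
    and "\<And>i a. i \<in> {1..m} \<Longrightarrow> a \<in> C i \<Longrightarrow> \<phi> a \<in> {1..n}"
  shows "image (\<phi> \<circ> c) ` G \<subseteq> all_edges {1..n}"
proof
  fix x assume "x \<in> image (\<phi> \<circ> c) ` G"
  then obtain e where e: "e \<in> G" "x = (\<phi> \<circ> c) ` e" by auto
  have em: "e \<subseteq> {1..m}" "card e = 2" using e assms(3) unfolding all_edges_def by auto
  have "card x = 2" using e em card_image[OF inj_on_subset[OF goodp_inj[OF assms(1,2)] em(1)]] by simp
  moreover have "x \<subseteq> {1..n}"
  proof
    fix y assume "y \<in> x"
    then obtain i where i: "i \<in> e" "y = \<phi> (c i)" using e by auto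
    then have im: "i \<in> {1..m}" using em by auto
    have "c i \<in> C i" using PiE_mem[OF assms(2) im] .
    then show "y \<in> {1..n}" using assms(4)[OF im] i by simp
  qed
  ultimately show "x \<in> all_edges {1..n}" unfolding all_edges_def by auto
qed

lemma CF_D:
  assumes "C \<in> CF m n q"
  shows "goodp m fst C" "goodp m snd C" "\<And>i. i \<in> {1..m} \<Longrightarrow> C i \<subseteq> {1..n} \<times> {1..n}"
    "\<And>i. i \<in> {1..m} \<Longrightarrow> card (C i) = q i" "\<And>i. i \<in> {1..m} \<Longrightarrow> finite (C i)"
proof -
  show "goodp m fst C" "goodp m snd C" using assms unfolding CF_def by auto
  show sub: "\<And>i. i \<in> {1..m} \<Longrightarrow> C i \<subseteq> {1..n} \<times> {1..n}"
    "\<And>i. i \<in> {1..m} \<Longrightarrow> card (C i) = q i" using assms unfolding CF_def by (auto simp: PiE_iff)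
  fix i assume "i \<in> {1..m}"
  show "finite (C i)" by (rule finite_subset[OF sub(1)[OF \<open>i \<in> {1..m}\<close>]]) auto
qed

lemma all_edges_Pow: "G \<subseteq> all_edges V \<Longrightarrow> G \<subseteq> Pow V"
  unfolding all_edges_def by auto

lemma finite_graph: "G \<subseteq> all_edges {1..m} \<Longrightarrow> finite G"
  using finite_all_edges[of "{1..m}"] by (auto intro: finite_subset)

lemma pair_bound:
  fixes K p1 p2 :: real
  assumes C: "C \<in> CF m n q" and c: "c \<in> PiE {1..m} C" and d: "d \<in> PiE {1..m} C"
    and G: "G \<subseteq> all_edges {1..m}" and H: "H \<subseteq> all_edges {1..m}"
    and p: "0 \<le> p1" "0 \<le> p2"
    and hyp: "\<forall>J. J \<subseteq> {1..m} \<longrightarrow> card (induced_edges G J) + card (induced_edges H J) \<ge> 1 \<longrightarrow>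
           p1 ^ card (induced_edges G J) * p2 ^ card (induced_edges H J) * (\<Prod>j\<in>J. real (q j)) \<ge> K"
  shows "of_bool (Sc G H c \<inter> Sc G H d \<noteq> {}) * (\<Prod>e\<in>Sc G H c \<union> Sc G H d. pp p1 p2 e) * K
     \<le> (p1 ^ card G * p2 ^ card H)^2 * (\<Sum>J'\<in>Pow {1..m}. of_bool (\<forall>j\<in>J'. d j = c j) * (\<Prod>j\<in>J'. real (q j)))"
proof -
  have g1: "goodp m fst C" and g2: "goodp m snd C" using CF_D[OF C] by auto
  have GP: "G \<subseteq> Pow {1..m}" and HP: "H \<subseteq> Pow {1..m}" using G H by (auto dest: all_edges_Pow)
  have fG: "finite G" and fH: "finite H" using finite_graph[OF G] finite_graph[OF H] by auto
  define J where "J = {i\<in>{1..m}. c i = d i}"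
  define Xc where "Xc = image (fst \<circ> c) ` G"
  define Xd where "Xd = image (fst \<circ> d) ` G"
  define Yc where "Yc = image (snd \<circ> c) ` H"
  define Yd where "Yd = image (snd \<circ> d) ` H"
  have fin: "finite Xc" "finite Xd" "finite Yc" "finite Yd" unfolding Xc_def Xd_def Yc_def Yd_def using fG fH by auto
  have cX: "card Xc = card G" "card Xd = card G" "card Yc = card H" "card Yd = card H"
    unfolding Xc_def Xd_def Yc_def Yd_def
    by (intro card_image goodp_inj_img[OF g1 c GP] goodp_inj_img[OF g1 d GP] goodp_inj_img[OF g2 c HP] goodp_inj_img[OF g2 d HP])+
  have indG: "induced_edges G J \<subseteq> G" and indH: "induced_edges H J \<subseteq> H" unfolding induced_edges_def by auto
  have cXI: "card (Xc \<inter> Xd) = card (induced_edges G J)"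
    unfolding Xc_def Xd_def J_def goodp_Int[OF g1 c d GP]
    by (rule card_image, rule inj_on_subset[OF goodp_inj_img[OF g1 c GP]]) (auto simp: induced_edges_def)
  have cYI: "card (Yc \<inter> Yd) = card (induced_edges H J)"
    unfolding Yc_def Yd_def J_def goodp_Int[OF g2 c d HP]
    by (rule card_image, rule inj_on_subset[OF goodp_inj_img[OF g2 c HP]]) (auto simp: induced_edges_def)
  have U: "Sc G H c \<union> Sc G H d = Inl ` (Xc \<union> Xd) \<union> Inr ` (Yc \<union> Yd)"
    unfolding Sc_def Xc_def Xd_def Yc_def Yd_def by auto
  have pcd: "(\<Prod>e\<in>Sc G H c \<union> Sc G H d. pp p1 p2 e) = p1 ^ card (Xc \<union> Xd) * p2 ^ card (Yc \<union> Yd)"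
    unfolding U using fin by (intro prod_pp) auto
  have cU1: "card (Xc \<union> Xd) + card (induced_edges G J) = 2 * card G"
    using card_Un_Int[OF fin(1,2)] cX cXI by simp
  have cU2: "card (Yc \<union> Yd) + card (induced_edges H J) = 2 * card H"
    using card_Un_Int[OF fin(3,4)] cX cYI by simp
  have rhs0: "0 \<le> (p1 ^ card G * p2 ^ card H)^2 * (\<Sum>J'\<in>Pow {1..m}. of_bool (\<forall>j\<in>J'. d j = c j) * (\<Prod>j\<in>J'. real (q j)))"
    by (intro mult_nonneg_nonneg sum_nonneg prod_nonneg) auto
  show ?thesis
  proof (cases "Sc G H c \<inter> Sc G H d = {}")
    case True then show ?thesis using rhs0 by simp
  next
    case False
    then have "Xc \<inter> Xd \<noteq> {} \<or> Yc \<inter> Yd \<noteq> {}" unfolding Sc_def Xc_def Xd_def Yc_def Yd_def by auto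
    moreover have "finite (Xc \<inter> Xd)" "finite (Yc \<inter> Yd)" using fin by auto
    ultimately have "card (Xc \<inter> Xd) > 0 \<or> card (Yc \<inter> Yd) > 0" by (auto simp: card_gt_0_iff)
    then have ne: "card (induced_edges G J) + card (induced_edges H J) \<ge> 1"
      using cXI cYI by auto
    have Jm: "J \<subseteq> {1..m}" unfolding J_def by auto
    have KJ: "K \<le> p1 ^ card (induced_edges G J) * p2 ^ card (induced_edges H J) * (\<Prod>j\<in>J. real (q j))"
      using hyp Jm ne by auto
    have "of_bool (Sc G H c \<inter> Sc G H d \<noteq> {}) * (\<Prod>e\<in>Sc G H c \<union> Sc G H d. pp p1 p2 e) * K
        = (p1 ^ card (Xc \<union> Xd) * p2 ^ card (Yc \<union> Yd)) * K" using False pcd by simp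
    also have "\<dots> \<le> (p1 ^ card (Xc \<union> Xd) * p2 ^ card (Yc \<union> Yd)) *
        (p1 ^ card (induced_edges G J) * p2 ^ card (induced_edges H J) * (\<Prod>j\<in>J. real (q j)))"
      using KJ p by (intro mult_left_mono) auto
    also have "\<dots> = p1 ^ (card (Xc \<union> Xd) + card (induced_edges G J)) * p2 ^ (card (Yc \<union> Yd) + card (induced_edges H J)) * (\<Prod>j\<in>J. real (q j))"
      by (simp add: power_add)
    also have "\<dots> = (p1 ^ card G * p2 ^ card H)^2 * (\<Prod>j\<in>J. real (q j))"
      unfolding cU1 cU2 by (simp add: power_mult_distrib power_mult[symmetric] mult.commute)
    also have "\<dots> \<le> (p1 ^ card G * p2 ^ card H)^2 * (\<Sum>J'\<in>Pow {1..m}. of_bool (\<forall>j\<in>J'. d j = c j) * (\<Prod>j\<in>J'. real (q j)))"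
    proof (rule mult_left_mono)
      have "(\<Prod>j\<in>J. real (q j)) = of_bool (\<forall>j\<in>J. d j = c j) * (\<Prod>j\<in>J. real (q j))" unfolding J_def by simp
      also have "\<dots> \<le> (\<Sum>J'\<in>Pow {1..m}. of_bool (\<forall>j\<in>J'. d j = c j) * (\<Prod>j\<in>J'. real (q j)))"
        using Jm by (intro member_le_sum[where f="\<lambda>J'. of_bool (\<forall>j\<in>J'. d j = c j) * (\<Prod>j\<in>J'. real (q j))"])
           (auto intro!: mult_nonneg_nonneg prod_nonneg)
      finally show "(\<Prod>j\<in>J. real (q j)) \<le> (\<Sum>J'\<in>Pow {1..m}. of_bool (\<forall>j\<in>J'. d j = c j) * (\<Prod>j\<in>J'. real (q j)))" .
    qed simp
    finally show ?thesis .
  qed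
qed

lemma Sc_split: "Sc G H c = Inl ` (image (fst \<circ> c) ` G) \<union> Inr ` (image (snd \<circ> c) ` H)"
  by (rule Sc_def)

lemma percfg:
  fixes K p1 p2 :: real
  assumes C: "C \<in> CF m n q"
    and G: "G \<subseteq> all_edges {1..m}" and H: "H \<subseteq> all_edges {1..m}"
    and p: "0 \<le> p1" "p1 \<le> 1" "0 \<le> p2" "p2 \<le> 1"
    and e: "card G + card H \<ge> 1" and K: "0 < K" and q1: "\<forall>i\<in>{1..m}. q i \<ge> 1"
    and hyp: "\<forall>J. J \<subseteq> {1..m} \<longrightarrow> card (induced_edges G J) + card (induced_edges H J) \<ge> 1 \<longrightarrow>
           p1 ^ card (induced_edges G J) * p2 ^ card (induced_edges H J) * (\<Prod>j\<in>J. real (q j)) \<ge> K"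
  shows "Ew (EE n) (pp p1 p2) (nd (Sc G H) (PiE {1..m} C)) \<le> exp (- (K / (2 * 2 ^ m)))"
proof -
  define I where "I = PiE {1..m} C"
  define \<rho> where "\<rho> = p1 ^ card G * p2 ^ card H"
  have g1: "goodp m fst C" and g2: "goodp m snd C" using CF_D[OF C] by auto
  have GP: "G \<subseteq> Pow {1..m}" and HP: "H \<subseteq> Pow {1..m}" using G H by (auto dest: all_edges_Pow)
  have fG: "finite G" and fH: "finite H" using finite_graph[OF G] finite_graph[OF H] by auto
  have finC: "\<And>i. i \<in> {1..m} \<Longrightarrow> finite (C i)" using CF_D(5)[OF C] .
  have finI: "finite I" unfolding I_def using finC by (intro finite_PiE) auto
  have cardI: "real (card I) = (\<Prod>i\<in>{1..m}. real (q i))"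
    unfolding I_def using finC CF_D(4)[OF C] by (simp add: card_PiE)
  have pc: "(\<Prod>e\<in>Sc G H c. pp p1 p2 e) = \<rho>" if c: "c \<in> I" for c
  proof -
    have "(\<Prod>e\<in>Sc G H c. pp p1 p2 e) = p1 ^ card (image (fst \<circ> c) ` G) * p2 ^ card (image (snd \<circ> c) ` H)"
      unfolding Sc_def using fG fH by (intro prod_pp) auto
    also have "card (image (fst \<circ> c) ` G) = card G"
      using c unfolding I_def by (intro card_image goodp_inj_img[OF g1 _ GP])
    also have "card (image (snd \<circ> c) ` H) = card H"
      using c unfolding I_def by (intro card_image goodp_inj_img[OF g2 _ HP])
    finally show ?thesis unfolding \<rho>_def .
  qed
  have Mu: "Mu (pp p1 p2) (Sc G H) I = real (card I) * \<rho>"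
    unfolding Mu_def using pc by simp
  have indall: "induced_edges G {1..m} = G" "induced_edges H {1..m} = H"
    using GP HP unfolding induced_edges_def by auto
  have rho0: "0 < \<rho>"
  proof -
    have "card (induced_edges G {1..m}) + card (induced_edges H {1..m}) \<ge> 1" using e indall by simp
    then have "K \<le> p1 ^ card (induced_edges G {1..m}) * p2 ^ card (induced_edges H {1..m}) * (\<Prod>j\<in>{1..m}. real (q j))"
      using hyp by blast
    then have "K \<le> \<rho> * (\<Prod>j\<in>{1..m}. real (q j))" unfolding \<rho>_def indall .
    moreover have "0 \<le> \<rho>" unfolding \<rho>_def using p by simp
    ultimately show ?thesis using K by (cases "\<rho> = 0") auto
  qed
  have I0: "0 < real (card I)"
    unfolding cardI
  proof (intro prod_pos)
    fix i assume "i \<in> {1..m}"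
    then have "q i \<ge> 1" using q1 by blast
    then show "0 < real (q i)" by simp
  qed
  have mu0: "0 < Mu (pp p1 p2) (Sc G H) I" unfolding Mu using rho0 I0 by simp
  have pE: "\<And>x. x \<in> EE n \<Longrightarrow> 0 \<le> pp p1 p2 x \<and> pp p1 p2 x \<le> 1"
    using p by (auto simp: EE_def)
  have fsn: "fst a \<in> {1..n} \<and> snd a \<in> {1..n}" if "i \<in> {1..m}" "a \<in> C i" for i a
  proof -
    have "a \<in> {1..n} \<times> {1..n}" using CF_D(3)[OF C that(1)] that(2) by blast
    then show ?thesis by (auto simp: mem_Times_iff)
  qed
  have SE: "Sc G H c \<subseteq> EE n" if c: "c \<in> I" for c
  proof -
    have A: "image (fst \<circ> c) ` G \<subseteq> all_edges {1..n}"
      using c fsn unfolding I_def by (intro img_all_edges[OF g1 _ G]) auto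
    have B: "image (snd \<circ> c) ` H \<subseteq> all_edges {1..n}"
      using c fsn unfolding I_def by (intro img_all_edges[OF g2 _ H]) auto
    show ?thesis unfolding Sc_def EE_def by (intro Un_mono image_mono A B)
  qed
  have Sne: "Sc G H c \<noteq> {}" for c
  proof -
    have "G \<noteq> {} \<or> H \<noteq> {}" using e by auto
    then show ?thesis unfolding Sc_def by auto
  qed
  have DK: "(\<Sum>c\<in>I. \<Sum>d\<in>I. of_bool (Sc G H c \<inter> Sc G H d \<noteq> {}) * (\<Prod>e\<in>Sc G H c \<union> Sc G H d. pp p1 p2 e)) * K
      \<le> 2 ^ m * Mu (pp p1 p2) (Sc G H) I ^ 2"
  proof -
    have "(\<Sum>c\<in>I. \<Sum>d\<in>I. of_bool (Sc G H c \<inter> Sc G H d \<noteq> {}) * (\<Prod>e\<in>Sc G H c \<union> Sc G H d. pp p1 p2 e)) * K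
        = (\<Sum>c\<in>I. \<Sum>d\<in>I. of_bool (Sc G H c \<inter> Sc G H d \<noteq> {}) * (\<Prod>e\<in>Sc G H c \<union> Sc G H d. pp p1 p2 e) * K)"
      by (simp add: sum_distrib_right)
    also have "\<dots> \<le> (\<Sum>c\<in>I. \<Sum>d\<in>I. \<rho>^2 * (\<Sum>J'\<in>Pow {1..m}. of_bool (\<forall>j\<in>J'. d j = c j) * (\<Prod>j\<in>J'. real (q j))))"
      unfolding \<rho>_def I_def
      by (intro sum_mono pair_bound[OF C _ _ G H p(1) p(3) hyp])
    also have "\<dots> = (\<Sum>c\<in>I. \<rho>^2 * (\<Sum>J'\<in>Pow {1..m}. (\<Prod>j\<in>{1..m}. real (q j))))"
    proof (rule sum.cong[OF refl])
      fix c assume c: "c \<in> I"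
      have "(\<Sum>d\<in>I. \<rho>^2 * (\<Sum>J'\<in>Pow {1..m}. of_bool (\<forall>j\<in>J'. d j = c j) * (\<Prod>j\<in>J'. real (q j))))
          = \<rho>^2 * (\<Sum>J'\<in>Pow {1..m}. (\<Sum>d\<in>I. of_bool (\<forall>j\<in>J'. d j = c j)) * (\<Prod>j\<in>J'. real (q j)))"
        by (simp add: sum_distrib_left sum_distrib_right sum.swap[of _ I])
      also have "\<dots> = \<rho>^2 * (\<Sum>J'\<in>Pow {1..m}. (\<Prod>j\<in>{1..m}. real (q j)))"
      proof -
        have "(\<Sum>d\<in>I. of_bool (\<forall>j\<in>J'. d j = c j)) * (\<Prod>j\<in>J'. real (q j)) = (\<Prod>j\<in>{1..m}. real (q j))"
          if J': "J' \<in> Pow {1..m}" for J'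
        proof -
          have "(\<Sum>d\<in>I. of_bool (\<forall>j\<in>J'. d j = c j)) = real (card {d\<in>I. \<forall>j\<in>J'. d j = c j})"
            using finI by (rule sum_of_bool_card)
          also have "card {d\<in>I. \<forall>j\<in>J'. d j = c j} = (\<Prod>i\<in>{1..m} - J'. card (C i))"
            unfolding I_def using J' c finC unfolding I_def by (intro card_agree) auto
          also have "\<dots> = (\<Prod>i\<in>{1..m} - J'. q i)"
            using CF_D(4)[OF C] by (intro prod.cong) auto
          finally have "(\<Sum>d\<in>I. of_bool (\<forall>j\<in>J'. d j = c j)) * (\<Prod>j\<in>J'. real (q j))
              = (\<Prod>i\<in>{1..m} - J'. real (q i)) * (\<Prod>j\<in>J'. real (q j))" by simp
          also have "\<dots> = (\<Prod>j\<in>{1..m}. real (q j))"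
            using J' by (subst prod.subset_diff[of J' "{1..m}"]) auto
          finally show ?thesis .
        qed
        then show ?thesis by simp
      qed
      finally show "(\<Sum>d\<in>I. \<rho>^2 * (\<Sum>J'\<in>Pow {1..m}. of_bool (\<forall>j\<in>J'. d j = c j) * (\<Prod>j\<in>J'. real (q j))))
          = \<rho>^2 * (\<Sum>J'\<in>Pow {1..m}. (\<Prod>j\<in>{1..m}. real (q j)))" .
    qed
    also have "\<dots> = 2 ^ m * Mu (pp p1 p2) (Sc G H) I ^ 2"
      unfolding Mu cardI[symmetric] by (simp add: card_Pow power2_eq_square)
    finally show ?thesis .
  qed
  have two: "(0::real) < 2 ^ m" by simp
  have "Ew (EE n) (pp p1 p2) (nd (Sc G H) I) \<le> exp (- (K / (2 * 2 ^ m)))"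
    by (rule janson_final2[OF finite_EE pE finI SE Sne mu0 K two DK])
  then show ?thesis unfolding I_def .
qed


lemma cover:
  assumes "\<not> q_embeddable m n q G H X Y"
  shows "\<exists>C\<in>CF m n q. \<forall>c\<in>PiE {1..m} C. \<not> (Sc G H c \<subseteq> Inl ` X \<union> Inr ` Y)"
proof -
  obtain V \<sigma> where V: "\<forall>i\<in>{1..m}. V i \<subseteq> {1..n} \<and> card (V i) = q i"
    and disj: "\<forall>i\<in>{1..m}. \<forall>j\<in>{1..m}. i \<noteq> j \<longrightarrow> V i \<inter> V j = {}"
    and bij: "bij_betw \<sigma> {1..n} {1..n}" and ne: "\<not> embeddable_wrt m n G H X Y V \<sigma>"
    using assms unfolding q_embeddable_def by blast
  have Vsub: "V i \<subseteq> {1..n}" if "i \<in> {1..m}" for i using V that by blast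
  define \<tau> where "\<tau> = inv_into {1..n} \<sigma>"
  have bt: "bij_betw \<tau> {1..n} {1..n}" unfolding \<tau>_def by (rule bij_betw_inv_into[OF bij])
  have injt: "inj_on \<tau> {1..n}" using bt by (rule bij_betw_imp_inj_on)
  have tn: "\<tau> y \<in> {1..n}" if "y \<in> {1..n}" for y using bij_betw_apply[OF bt that] .
  define C where "C = restrict (\<lambda>i. (\<lambda>y. (\<tau> y, y)) ` V i) {1..m}"
  have Ci: "C i = (\<lambda>y. (\<tau> y, y)) ` V i" if "i \<in> {1..m}" for i using that unfolding C_def by simp
  have CF: "C \<in> CF m n q"
    unfolding CF_def
  proof (intro CollectI conjI)
    show "C \<in> PiE {1..m} (\<lambda>i. {A. A \<subseteq> {1..n} \<times> {1..n} \<and> card A = q i})"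
    proof (rule PiE_I)
      fix i assume i: "i \<in> {1..m}"
      have Vi: "V i \<subseteq> {1..n}" using V i by blast
      have "C i \<subseteq> {1..n} \<times> {1..n}"
      proof
        fix x assume "x \<in> C i"
        then obtain y where y: "y \<in> V i" "x = (\<tau> y, y)" unfolding Ci[OF i] by auto
        then have "y \<in> {1..n}" using Vi by blast
        then show "x \<in> {1..n} \<times> {1..n}" using y tn[of y] by simp
      qed
      moreover have "card (C i) = q i" unfolding Ci[OF i] using V i
        by (subst card_image) (auto simp: inj_on_def)
      ultimately show "C i \<in> {A. A \<subseteq> {1..n} \<times> {1..n} \<and> card A = q i}" by simp
    next
      fix i assume "i \<notin> {1..m}" then show "C i = undefined" unfolding C_def by auto
    qed
    show "goodp m fst C" unfolding goodp_def
    proof (intro ballI impI)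
      fix i j a b assume ij: "i \<in> {1..m}" "j \<in> {1..m}" "a \<in> C i" "b \<in> C j" "fst a = fst b"
      then obtain y y' where y: "y \<in> V i" "a = (\<tau> y, y)" "y' \<in> V j" "b = (\<tau> y', y')" by (auto simp: Ci)
      have "y \<in> {1..n}" "y' \<in> {1..n}" using y Vsub[OF ij(1)] Vsub[OF ij(2)] by blast+
      then have "y = y'" using injt ij y by (auto dest: inj_onD)
      then show "i = j \<and> a = b" using disj ij y by blast
    qed
    show "goodp m snd C" unfolding goodp_def
    proof (intro ballI impI)
      fix i j a b assume ij: "i \<in> {1..m}" "j \<in> {1..m}" "a \<in> C i" "b \<in> C j" "snd a = snd b"
      then obtain y y' where y: "y \<in> V i" "a = (\<tau> y, y)" "y' \<in> V j" "b = (\<tau> y', y')" by (auto simp: Ci)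
      then have "y = y'" using ij by simp
      then show "i = j \<and> a = b" using disj ij y by blast
    qed
  qed
  have "\<forall>c\<in>PiE {1..m} C. \<not> (Sc G H c \<subseteq> Inl ` X \<union> Inr ` Y)"
  proof (intro ballI notI)
    fix c assume c: "c \<in> PiE {1..m} C" and sub: "Sc G H c \<subseteq> Inl ` X \<union> Inr ` Y"
    have X: "image (fst \<circ> c) e \<in> X" if "e \<in> G" for e
    proof -
      have "Inl (image (fst \<circ> c) e) \<in> Sc G H c" unfolding Sc_def using that by auto
      then show ?thesis using sub by auto
    qed
    have Y: "image (snd \<circ> c) e \<in> Y" if "e \<in> H" for e
    proof -
      have "Inr (image (snd \<circ> c) e) \<in> Sc G H c" unfolding Sc_def using that by auto
      then show ?thesis using sub by auto
    qed
    define v where "v i = snd (c i)" for i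
    have cv: "c i = (\<tau> (v i), v i) \<and> v i \<in> V i" if i: "i \<in> {1..m}" for i
    proof -
      have "c i \<in> C i" using PiE_mem[OF c i] .
      then obtain y where "y \<in> V i" "c i = (\<tau> y, y)" using Ci[OF i] by auto
      then show ?thesis unfolding v_def by simp
    qed
    have "embeddable_wrt m n G H X Y V \<sigma>"
      unfolding embeddable_wrt_def
    proof (rule exI[of _ v], intro conjI ballI impI)
      fix i assume "i \<in> {1..m}" then show "v i \<in> V i" using cv by blast
    next
      fix i j assume ij: "i \<in> {1..m}" "j \<in> {1..m}"
      {
        assume "{i, j} \<in> H"
        then have "image (snd \<circ> c) {i, j} \<in> Y" by (rule Y)
        then show "{v i, v j} \<in> Y" unfolding v_def by simp
      }
      {
        assume "{i, j} \<in> G"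
        then have "image (fst \<circ> c) {i, j} \<in> X" by (rule X)
        moreover have "image (fst \<circ> c) {i, j} = {inv_into {1..n} \<sigma> (v i), inv_into {1..n} \<sigma> (v j)}"
          using cv[OF ij(1)] cv[OF ij(2)] unfolding \<tau>_def by simp
        ultimately show "{inv_into {1..n} \<sigma> (v i), inv_into {1..n} \<sigma> (v j)} \<in> X" by simp
      }
    qed
    then show False using ne by simp
  qed
  then show ?thesis using CF by blast
qed


lemma card_CF:
  assumes "\<forall>i\<in>{1..m}. q i \<le> n"
  shows "finite (CF m n q) \<and> card (CF m n q) \<le> n ^ (2 * (\<Sum>i\<in>{1..m}. q i))"
proof -
  define P where "P = PiE {1..m} (\<lambda>i. {A. A \<subseteq> {1..n} \<times> {1..n} \<and> card A = q i})"
  have finP: "finite P" unfolding P_def by (intro finite_PiE) auto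
  have sub: "CF m n q \<subseteq> P" unfolding CF_def P_def by auto
  have "card (CF m n q) \<le> card P" using finP sub by (rule card_mono)
  also have "card P = (\<Prod>i\<in>{1..m}. card {A. A \<subseteq> {1..n} \<times> {1..n} \<and> card A = q i})"
    unfolding P_def by (simp add: card_PiE)
  also have "\<dots> = (\<Prod>i\<in>{1..m}. (n * n) choose q i)"
    by (intro prod.cong refl) (simp add: n_subsets)
  also have "\<dots> \<le> (\<Prod>i\<in>{1..m}. (n * n) ^ q i)"
  proof (rule prod_mono)
    fix i assume i: "i \<in> {1..m}"
    have "q i \<le> n * n" using assms i by (metis le_trans le_square)
    then show "0 \<le> (n * n) choose q i \<and> (n * n) choose q i \<le> (n * n) ^ q i"
      by (simp add: binomial_le_pow)
  qed
  also have "\<dots> = (n * n) ^ (\<Sum>i\<in>{1..m}. q i)" by (simp add: power_sum)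
  also have "\<dots> = n ^ (2 * (\<Sum>i\<in>{1..m}. q i))" by (simp add: power_mult power2_eq_square)
  finally show ?thesis using finite_subset[OF sub finP] by simp
qed

lemma no_edges_emb:
  assumes "\<forall>i\<in>{1..m}. q i \<ge> 1"
  shows "q_embeddable m n q {} {} X Y"
  unfolding q_embeddable_def embeddable_wrt_def
proof (intro allI impI)
  fix V :: "nat \<Rightarrow> nat set" and \<sigma> :: "nat \<Rightarrow> nat"
  assume h: "(\<forall>i\<in>{1..m}. V i \<subseteq> {1..n} \<and> card (V i) = q i) \<and>
         (\<forall>i\<in>{1..m}. \<forall>j\<in>{1..m}. i \<noteq> j \<longrightarrow> V i \<inter> V j = {}) \<and> bij_betw \<sigma> {1..n} {1..n}"
  have Vne: "V i \<noteq> {}" if i: "i \<in> {1..m}" for i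
  proof
    assume "V i = {}"
    moreover have "card (V i) = q i" using h i by blast
    ultimately have "q i = 0" by simp
    moreover have "q i \<ge> 1" using assms i by blast
    ultimately show False by simp
  qed
  have "\<forall>i\<in>{1..m}. (SOME y. y \<in> V i) \<in> V i"
  proof
    fix i assume "i \<in> {1..m}"
    then show "(SOME y. y \<in> V i) \<in> V i" using Vne by (simp add: some_in_eq)
  qed
  then show "\<exists>v. (\<forall>i\<in>{1..m}. v i \<in> V i) \<and>
          (\<forall>i\<in>{1..m}. \<forall>j\<in>{1..m}. ({i, j} \<in> {} \<longrightarrow> {v i, v j} \<in> Y) \<and>
              ({i, j} \<in> {} \<longrightarrow> {inv_into {1..n} \<sigma> (v i), inv_into {1..n} \<sigma> (v j)} \<in> X))"
    by (intro exI[of _ "\<lambda>i. SOME y. y \<in> V i"]) simp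
qed

theorem lemma3p2:
  fixes m n :: nat and q :: "nat \<Rightarrow> nat" and G H :: "nat set set" and p1 p2 :: real
  assumes "m \<ge> 1" and "n \<ge> 1"
    and "\<forall>i\<in>{1..m}. q i \<ge> 1"
    and "(\<Sum>i\<in>{1..m}. q i) \<le> n"
    and "is_graph_on {1..m} G" and "is_graph_on {1..m} H"
    and "0 \<le> p1" and "p1 \<le> 1" and "0 \<le> p2" and "p2 \<le> 1"
    and "\<forall>J. J \<subseteq> {1..m} \<longrightarrow>
           card (induced_edges G J) + card (induced_edges H J) \<ge> 1 \<longrightarrow>
           p1 ^ card (induced_edges G J) * p2 ^ card (induced_edges H J) * (\<Prod>j\<in>J. real (q j))
             \<ge> 3 * 2 ^ (m + 1) * real (\<Sum>i\<in>{1..m}. q i) * ln (real n)"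
  shows "measure_pmf.prob (pair_pmf (gnp n p1) (gnp n p2))
           {(X, Y). q_embeddable m n q G H X Y}
         \<ge> 1 - real n powr (- real (\<Sum>i\<in>{1..m}. q i))"
proof -
  note m1 = assms(1) and n1 = assms(2) and q1 = assms(3) and Qn = assms(4)
  note p = assms(7-10) and hyp = assms(11)
  have G: "G \<subseteq> all_edges {1..m}" and H: "H \<subseteq> all_edges {1..m}"
    using assms(5,6) unfolding is_graph_on_def by auto
  define Q where "Q = (\<Sum>i\<in>{1..m}. q i)"
  define pr where "pr = measure_pmf.prob (pair_pmf (gnp n p1) (gnp n p2)) {(X, Y). q_embeddable m n q G H X Y}"
  have pr: "pr = Ew (EE n) (pp p1 p2) (\<lambda>T. of_bool (q_embeddable m n q G H (Inl -` T) (Inr -` T)))"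
    unfolding pr_def by (rule bridge[OF p])
  have pE: "\<And>x. x \<in> EE n \<Longrightarrow> 0 \<le> pp p1 p2 x \<and> pp p1 p2 x \<le> 1"
    using p by (auto simp: EE_def)
  have Q1: "Q \<ge> 1"
  proof -
    have "1 \<in> {1..m}" using m1 by simp
    then have "q 1 \<le> Q" unfolding Q_def by (intro member_le_sum) auto
    moreover have "q 1 \<ge> 1" using q1 \<open>1 \<in> {1..m}\<close> by blast
    ultimately show ?thesis by simp
  qed
  show ?thesis unfolding pr_def[symmetric] Q_def[symmetric]
  proof (cases "n = 1")
    case True
    have "0 \<le> pr" unfolding pr_def by simp
    then show "1 - real n powr - real Q \<le> pr" using True by simp
  next
    case False
    then have n2: "n \<ge> 2" using n1 by simp
    show "1 - real n powr - real Q \<le> pr"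
    proof (cases "card G + card H = 0")
      case True
      then have "G = {}" "H = {}" using finite_graph[OF G] finite_graph[OF H] by auto
      then have "pr = Ew (EE n) (pp p1 p2) (\<lambda>T. 1)"
        unfolding pr using no_edges_emb[OF q1] by simp
      also have "\<dots> = 1" by (rule Ew_const[OF finite_EE])
      finally show ?thesis by simp
    next
      case False
      then have e: "card G + card H \<ge> 1" by linarith
      define K where "K = 3 * 2 ^ (m + 1) * real Q * ln (real n)"
      have lnn: "0 < ln (real n)" using n2 by simp
      have K0: "0 < K" unfolding K_def using Q1 lnn by simp
      have Kexp: "exp (- (K / (2 * 2 ^ m))) = real n powr (- (3 * real Q))"
      proof -
        have "K / (2 * 2 ^ m) = 3 * real Q * ln (real n)" unfolding K_def by (simp add: field_simps)
        then show ?thesis using n2 by (simp add: powr_def)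
      qed
      have qn: "\<forall>i\<in>{1..m}. q i \<le> n"
      proof
        fix i assume "i \<in> {1..m}"
        then have "q i \<le> Q" unfolding Q_def by (intro member_le_sum) auto
        then show "q i \<le> n" using Qn unfolding Q_def by simp
      qed
      obtain finCF: "finite (CF m n q)" and cCF: "card (CF m n q) \<le> n ^ (2 * Q)"
        using card_CF[OF qn] unfolding Q_def by blast
      have each: "Ew (EE n) (pp p1 p2) (nd (Sc G H) (PiE {1..m} C)) \<le> real n powr (- (3 * real Q))"
        if C: "C \<in> CF m n q" for C
        using percfg[OF C G H p e K0 q1 hyp[unfolded Q_def[symmetric] K_def[symmetric]]] Kexp by simp
      have "Ew (EE n) (pp p1 p2) (\<lambda>T. 1 - (\<Sum>C\<in>CF m n q. nd (Sc G H) (PiE {1..m} C) T)) \<le> pr"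
        unfolding pr
      proof (rule Ew_mono[OF pE])
        fix T assume T: "T \<subseteq> EE n"
        show "1 - (\<Sum>C\<in>CF m n q. nd (Sc G H) (PiE {1..m} C) T) \<le> of_bool (q_embeddable m n q G H (Inl -` T) (Inr -` T))"
        proof (cases "q_embeddable m n q G H (Inl -` T) (Inr -` T)")
          case True
          have "0 \<le> (\<Sum>C\<in>CF m n q. nd (Sc G H) (PiE {1..m} C) T)" by (intro sum_nonneg nd_nonneg)
          then show ?thesis using True by simp
        next
          case False
          obtain C where C: "C \<in> CF m n q" and nc: "\<forall>c\<in>PiE {1..m} C. \<not> Sc G H c \<subseteq> Inl ` (Inl -` T) \<union> Inr ` (Inr -` T)"
            using cover[OF False] by blast
          have "nd (Sc G H) (PiE {1..m} C) T = 1" using nc unfolding nd_def split_sum_set by simp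
          then have "1 \<le> (\<Sum>C\<in>CF m n q. nd (Sc G H) (PiE {1..m} C) T)"
            using member_le_sum[of C "CF m n q" "\<lambda>C. nd (Sc G H) (PiE {1..m} C) T"] C finCF nd_nonneg by auto
          then show ?thesis using False by simp
        qed
      qed
      moreover have "Ew (EE n) (pp p1 p2) (\<lambda>T. 1 - (\<Sum>C\<in>CF m n q. nd (Sc G H) (PiE {1..m} C) T))
          = 1 - (\<Sum>C\<in>CF m n q. Ew (EE n) (pp p1 p2) (nd (Sc G H) (PiE {1..m} C)))"
        by (simp add: Ew_diff Ew_const[OF finite_EE] Ew_sum)
      moreover have "(\<Sum>C\<in>CF m n q. Ew (EE n) (pp p1 p2) (nd (Sc G H) (PiE {1..m} C))) \<le> real n powr - real Q"
      proof -
        have "(\<Sum>C\<in>CF m n q. Ew (EE n) (pp p1 p2) (nd (Sc G H) (PiE {1..m} C)))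
            \<le> (\<Sum>C\<in>CF m n q. real n powr (- (3 * real Q)))" by (intro sum_mono each)
        also have "\<dots> = real (card (CF m n q)) * real n powr (- (3 * real Q))" by simp
        also have "\<dots> \<le> real n ^ (2 * Q) * real n powr (- (3 * real Q))"
        proof (rule mult_right_mono)
          have "real (card (CF m n q)) \<le> real (n ^ (2 * Q))" using cCF by (rule of_nat_mono)
          then show "real (card (CF m n q)) \<le> real n ^ (2 * Q)" by simp
        qed simp
        also have "\<dots> = real n powr - real Q"
        proof -
          have "real n powr real (2 * Q) = real n ^ (2 * Q)" using n2 by (intro powr_realpow) simp
          then have "real n ^ (2 * Q) = real n powr (2 * real Q)" by simp
          then show ?thesis using n2 by (simp add: powr_add[symmetric])
        qed
        finally show ?thesis .
      qed
      ultimately show ?thesis by linarith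
    qed
  qed
qed


end
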